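(* Let $N\ge 2$, let $a,b\in\mathbb{R}$, and let $M\in\mathbb{R}^{N\times N}$ be a real symmetric matrix with an orthonormal basis of eigenvectors $V_{\cdot,1},\dots,V_{\cdot,N}$ (where $V_{\cdot,k}=(V_{1,k},\dots,V_{N,k})^t$) and corresponding eigenvalues $\lambda_1=0$ and $\lambda_k<0$ for $k=2,\dots,N$. Consider the system $$\dot x_i = y_i + a x_i^2 + b x_i^3 + \sum_{j=1}^N M_{ij}x_j,\qquad \dot y_i=-x_i,\qquad i=1,\dots,N.$$ Then the origin is an equilibrium whose linearization has exactly one pair of purely imaginary eigenvalues $\pm i$, all other eigenvalues having negative real part, and the first Lyapunov coefficient $l_1(0)$ of the system restricted to the two-dimensional center manifold at the origin has the same sign as $$L=\frac{3}{8}\,b\sum_{\phi=1}^N V_{\phi,1}^4 \;+\; a^2\sum_{k=2}^N\Big(\sum_{\phi=1}^N V_{\phi,k}V_{\phi,1}^2\Big)^2\frac{-\lambda_k}{4\lambda_k^2+9}.$$ In particular, if $b<0$ (so that each uncoupled unit $\dot x=y+ax^2+bx^3,\ \dot y=-x$ is poised at a supercritical Andronov–Hopf bifurcation) and $D:=\sum_{k=2}^N\big(\sum_{\phi}V_{\phi,k}V_{\phi,1}^2\big)^2\frac{-\lambda_k}{4\lambda_k^2+9}>0$, then $l_1(0)>0$ (subcritical) if $|a|>\gamma\sqrt{-b}$ and $l_1(0)<0$ (supercritical) if $|a|<\gamma\sqrt{-b}$, where $\gamma=\sqrt{\tfrac{3}{8}\sum_{\phi}V_{\phi,1}^4\big/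 D}$; while if $b>0$ then $l_1(0)>0$ for every $a$.
   Context: For a planar system $\dot x = y + f(x,y)$, $\dot y = -x + g(x,y)$ with $f,g$ containing only terms of order $\ge 2$, the first Lyapunov coefficient is $l_1(0)=\frac{1}{16}(f_{xxx}+f_{xyy}+g_{xxy}+g_{yyy})+\frac{1}{16}\big(f_{xy}(f_{xx}+f_{yy})-g_{xy}(g_{xx}+g_{yy})-f_{xx}g_{xx}+f_{yy}g_{yy}\big)$, partial derivatives evaluated at $0$. The center-manifold restriction is written in the coordinates $u=\sum_\phi V_{\phi,1}x_\phi$, $p=\sum_\phi V_{\phi,1}y_\phi$, in which its linear part is $\dot u=p$, $\dot p=-u$. When the leading eigenvalue of the coupling matrix is used as a bifurcation parameter crossing $0$, the resulting Andronov–Hopf bifurcation is called subcritical if $l_1(0)>0$ and supercritical if $l_1(0)<0$. *)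

theory Defs
  imports "HOL-Analysis.Analysis" "HOL-Computational_Algebra.Polynomial"
begin

definition charpoly :: "real^'m^'m \<Rightarrow> complex poly" where
  "charpoly A = det (\<chi> i j. (if i = j then [:0, 1:] else 0) - [:complex_of_real (A $ i $ j):])"

definition pd1 :: "(real \<times> real \<Rightarrow> 'a::real_normed_vector) \<Rightarrow> real \<times> real \<Rightarrow> 'a" where
  "pd1 f w = vector_derivative (\<lambda>s. f (s, snd w)) (at (fst w))"

definition pd2 :: "(real \<times> real \<Rightarrow> 'a::real_normed_vector) \<Rightarrow> real \<times> real \<Rightarrow> 'a" where
  "pd2 f w = vector_derivative (\<lambda>t. f (fst w, t)) (at (snd w))"

fun Ck :: "nat \<Rightarrow> (real \<times> real) set \<Rightarrow> (real \<times> real \<Rightarrow> 'a::real_normed_vector) \<Rightarrow> bool" where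
  "Ck 0 S f = continuous_on S f"
| "Ck (Suc k) S f =
     ((\<forall>w\<in>S. (\<lambda>s. f (s, snd w)) differentiable (at (fst w))
            \<and> (\<lambda>t. f (fst w, t)) differentiable (at (snd w)))
      \<and> continuous_on S f \<and> Ck k S (pd1 f) \<and> Ck k S (pd2 f))"

section \<open>First Lyapunov coefficient of a planar system x' = y + f, y' = -x + g\<close>

definition lyap1 :: "(real \<times> real \<Rightarrow> real) \<Rightarrow> (real \<times> real \<Rightarrow> real) \<Rightarrow> real" where
  "lyap1 f g =
    (let f_xxx = pd1 (pd1 (pd1 f)) (0,0); f_xyy = pd1 (pd2 (pd2 f)) (0,0);
         g_xxy = pd1 (pd1 (pd2 g)) (0,0); g_yyy = pd2 (pd2 (pd2 g)) (0,0);
         f_xy = pd1 (pd2 f) (0,0); f_xx = pd1 (pd1 f) (0,0); f_yy = pd2 (pd2 f) (0,0);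
         g_xy = pd1 (pd2 g) (0,0); g_xx = pd1 (pd1 g) (0,0); g_yy = pd2 (pd2 g) (0,0)
     in (1/16) * (f_xxx + f_xyy + g_xxy + g_yyy)
        + (1/16) * (f_xy * (f_xx + f_yy) - g_xy * (g_xx + g_yy) - f_xx * g_xx + f_yy * g_yy))"

text \<open>
  Phi : S -> state space parametrises a C^3 surface through 0 which is a graph over the
  center eigenspace spanned by e1, e2: the center coordinates (cu, cp) of Phi(u,p) are (u,p),
  Phi(0,0) = 0 and the derivative of Phi at 0 maps onto the center eigenspace (so the
  stable-direction part h has h(0) = 0, Dh(0) = 0). Invariance: the vector field F is tangent
  to the surface; the tangent vector is then necessarily the reduced field
  (cu (F (Phi w)), cp (F (Phi w))).
\<close>
definition local_center_manifold ::
  "('m::real_normed_vector \<Rightarrow> 'm) \<Rightarrow> ('m \<Rightarrow> real) \<Rightarrow> ('m \<Rightarrow> real) \<Rightarrow> 'm \<Rightarrow> 'm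
     \<Rightarrow> (real \<times> real) set \<Rightarrow> (real \<times> real \<Rightarrow> 'm) \<Rightarrow> bool" where
  "local_center_manifold F cu cp e1 e2 S Phi \<longleftrightarrow>
     open S \<and> (0,0) \<in> S \<and> Phi (0,0) = 0 \<and>
     (\<forall>w\<in>S. cu (Phi w) = fst w \<and> cp (Phi w) = snd w) \<and>
     pd1 Phi (0,0) = e1 \<and> pd2 Phi (0,0) = e2 \<and>
     Ck 3 S Phi \<and>
     (\<forall>w\<in>S. F (Phi w) = cu (F (Phi w)) *\<^sub>R pd1 Phi w + cp (F (Phi w)) *\<^sub>R pd2 Phi w)"

text \<open>State z in R^(2N): z \$ Inl i = x_i, z \$ Inr i = y_i.\<close>
definition coupled_field :: "real \<Rightarrow> real \<Rightarrow> real^'n^'n \<Rightarrow> real^('n + 'n) \<Rightarrow> real^('n + 'n)" where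
  "coupled_field a b M z = (\<chi> s. case s of
      Inl i \<Rightarrow> z $ Inr i + a * (z $ Inl i)^2 + b * (z $ Inl i)^3 + (\<Sum>j\<in>UNIV. M $ i $ j * z $ Inl j)
    | Inr i \<Rightarrow> - z $ Inl i)"

definition coord_u :: "real^'n^'n \<Rightarrow> 'n \<Rightarrow> real^('n + 'n) \<Rightarrow> real" where
  "coord_u V k0 z = (\<Sum>\<phi>\<in>UNIV. V $ \<phi> $ k0 * z $ Inl \<phi>)"

definition coord_p :: "real^'n^'n \<Rightarrow> 'n \<Rightarrow> real^('n + 'n) \<Rightarrow> real" where
  "coord_p V k0 z = (\<Sum>\<phi>\<in>UNIV. V $ \<phi> $ k0 * z $ Inr \<phi>)"

definition center_e1 :: "real^'n^'n \<Rightarrow> 'n \<Rightarrow> real^('n + 'n)" where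
  "center_e1 V k0 = (\<chi> s. case s of Inl \<phi> \<Rightarrow> V $ \<phi> $ k0 | Inr \<phi> \<Rightarrow> 0)"

definition center_e2 :: "real^'n^'n \<Rightarrow> 'n \<Rightarrow> real^('n + 'n)" where
  "center_e2 V k0 = (\<chi> s. case s of Inl \<phi> \<Rightarrow> 0 | Inr \<phi> \<Rightarrow> V $ \<phi> $ k0)"

text \<open>Nonlinear parts f, g of the restricted system u' = p + f(u,p), p' = -u + g(u,p).\<close>
definition restr_f :: "real \<Rightarrow> real \<Rightarrow> real^'n^'n \<Rightarrow> real^'n^'n \<Rightarrow> 'n \<Rightarrow> (real \<times> real \<Rightarrow> real^('n + 'n)) \<Rightarrow> real \<times> real \<Rightarrow> real" where
  "restr_f a b M V k0 Phi w = coord_u V k0 (coupled_field a b M (Phi w)) - snd w"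

definition restr_g :: "real \<Rightarrow> real \<Rightarrow> real^'n^'n \<Rightarrow> real^'n^'n \<Rightarrow> 'n \<Rightarrow> (real \<times> real \<Rightarrow> real^('n + 'n)) \<Rightarrow> real \<times> real \<Rightarrow> real" where
  "restr_g a b M V k0 Phi w = coord_p V k0 (coupled_field a b M (Phi w)) + fst w"

end

theory Submission
  imports Defs
begin


lemma vd_cong_open:
  fixes f g :: "real \<Rightarrow> 'a::real_normed_vector"
  assumes "open T" "x \<in> T" "\<And>y. y \<in> T \<Longrightarrow> f y = g y"
  shows "vector_derivative f (at x) = vector_derivative g (at x)"
proof -
  have "\<And>f'. (f has_vector_derivative f') (at x) \<longleftrightarrow> (g has_vector_derivative f') (at x)"
    using has_vector_derivative_transform_within_open[OF _ assms(1,2)] assms(3) by metis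
  then show ?thesis unfolding vector_derivative_def by simp
qed

lemma diff_cong_open:
  fixes f g :: "real \<Rightarrow> 'a::real_normed_vector"
  assumes "open T" "x \<in> T" "\<And>y. y \<in> T \<Longrightarrow> f y = g y" "f differentiable (at x)"
  shows "g differentiable (at x)"
  using assms has_derivative_transform_within_open unfolding differentiable_def by metis

lemma open_line1: "open S \<Longrightarrow> open {s. (s, t) \<in> S}"
proof -
  assume "open S"
  then have "open ((\<lambda>s. (s, t)) -` S)"
    by (rule open_vimage) (intro continuous_intros)
  then show ?thesis by (simp add: vimage_def)
qed

lemma open_line2: "open S \<Longrightarrow> open {t. (s, t) \<in> S}"
proof -
  assume "open S"
  then have "open ((\<lambda>t. (s, t)) -` S)"
    by (rule open_vimage) (intro continuous_intros)
  then show ?thesis by (simp add: vimage_def)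
qed

lemma pd1_local:
  assumes "open S" "w \<in> S" "\<And>v. v \<in> S \<Longrightarrow> f v = g v"
  shows "pd1 f w = pd1 g w"
  unfolding pd1_def
  by (rule vd_cong_open[OF open_line1[OF assms(1), of "snd w"]]) (use assms in auto)

lemma pd2_local:
  assumes "open S" "w \<in> S" "\<And>v. v \<in> S \<Longrightarrow> f v = g v"
  shows "pd2 f w = pd2 g w"
  unfolding pd2_def
  by (rule vd_cong_open[OF open_line2[OF assms(1), of "fst w"]]) (use assms in auto)

lemma LD1_local:
  fixes f g :: "real \<times> real \<Rightarrow> 'a::real_normed_vector"
  assumes "open S" "w \<in> S" "\<And>v. v \<in> S \<Longrightarrow> f v = g v"
    "(\<lambda>s. f (s, snd w)) differentiable (at (fst w))"
  shows "(\<lambda>s. g (s, snd w)) differentiable (at (fst w))"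
  by (rule diff_cong_open[OF open_line1[OF assms(1), of "snd w"]]) (use assms in auto)

lemma LD2_local:
  fixes f g :: "real \<times> real \<Rightarrow> 'a::real_normed_vector"
  assumes "open S" "w \<in> S" "\<And>v. v \<in> S \<Longrightarrow> f v = g v"
    "(\<lambda>t. f (fst w, t)) differentiable (at (snd w))"
  shows "(\<lambda>t. g (fst w, t)) differentiable (at (snd w))"
  by (rule diff_cong_open[OF open_line2[OF assms(1), of "fst w"]]) (use assms in auto)


declare Ck.simps[simp del]

lemma Ck_Suc_iff: "Ck (Suc k) S f \<longleftrightarrow> ((\<forall>w\<in>S. (\<lambda>s. f (s, snd w)) differentiable (at (fst w))
            \<and> (\<lambda>t. f (fst w, t)) differentiable (at (snd w)))
      \<and> continuous_on S f \<and> Ck k S (pd1 f) \<and> Ck k S (pd2 f))"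
  by (rule Ck.simps(2))

lemma Ck_0_iff: "Ck 0 S f \<longleftrightarrow> continuous_on S f"
  by (rule Ck.simps(1))

lemma Ck_cong:
  fixes f g :: "real \<times> real \<Rightarrow> 'a::real_normed_vector"
  assumes "open S" "\<And>v. v \<in> S \<Longrightarrow> f v = g v" "Ck k S f"
  shows "Ck k S g"
  using assms(2,3)
proof (induction k arbitrary: f g)
  case 0
  then show ?case unfolding Ck_0_iff using continuous_on_eq by blast
next
  case (Suc k)
  have A: "\<forall>w\<in>S. (\<lambda>s. g (s, snd w)) differentiable (at (fst w))
            \<and> (\<lambda>t. g (fst w, t)) differentiable (at (snd w))"
  proof
    fix w assume w: "w \<in> S"
    have d1: "(\<lambda>s. f (s, snd w)) differentiable (at (fst w))" and d2: "(\<lambda>t. f (fst w, t)) differentiable (at (snd w))"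
      using Suc.prems(2) w unfolding Ck.simps by auto
    have "(\<lambda>s. g (s, snd w)) differentiable (at (fst w))"
      by (rule LD1_local[OF assms(1) w]) (use Suc.prems(1) d1 in auto)
    moreover have "(\<lambda>t. g (fst w, t)) differentiable (at (snd w))"
      by (rule LD2_local[OF assms(1) w]) (use Suc.prems(1) d2 in auto)
    ultimately show "(\<lambda>s. g (s, snd w)) differentiable (at (fst w))
            \<and> (\<lambda>t. g (fst w, t)) differentiable (at (snd w))" by blast
  qed
  have B: "continuous_on S g" using Suc.prems continuous_on_eq unfolding Ck_Suc_iff by blast
  have C: "Ck k S (pd1 g)"
  proof (rule Suc.IH[of "pd1 f"])
    show "Ck k S (pd1 f)" using Suc.prems(2) unfolding Ck_Suc_iff by blast
    fix v assume "v \<in> S"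
    then show "pd1 f v = pd1 g v" by (rule pd1_local[OF assms(1)]) (use Suc.prems(1) in auto)
  qed
  have D: "Ck k S (pd2 g)"
  proof (rule Suc.IH[of "pd2 f"])
    show "Ck k S (pd2 f)" using Suc.prems(2) unfolding Ck_Suc_iff by blast
    fix v assume "v \<in> S"
    then show "pd2 f v = pd2 g v" by (rule pd2_local[OF assms(1)]) (use Suc.prems(1) in auto)
  qed
  show ?case using A B C D unfolding Ck_Suc_iff by blast
qed

lemma Ck_mono: "Ck (Suc k) S f \<Longrightarrow> Ck k S f"
proof (induction k arbitrary: f)
  case 0 then show ?case unfolding Ck_Suc_iff Ck_0_iff by blast
next
  case (Suc k)
  have "Ck (Suc k) S (pd1 f)" "Ck (Suc k) S (pd2 f)" using Suc.prems unfolding Ck_Suc_iff[of "Suc k"] by blast+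
  then have "Ck k S (pd1 f)" "Ck k S (pd2 f)" using Suc.IH by blast+
  then show ?case using Suc.prems unfolding Ck_Suc_iff[of "Suc k"] Ck_Suc_iff[of k] by blast
qed

lemma Ck_cont: "Ck k S f \<Longrightarrow> continuous_on S f"
  by (cases k) (auto simp: Ck_Suc_iff Ck_0_iff)

lemma Ck_LD: "Ck (Suc k) S f \<Longrightarrow> w \<in> S \<Longrightarrow> (\<lambda>s. f (s, snd w)) differentiable (at (fst w))
            \<and> (\<lambda>t. f (fst w, t)) differentiable (at (snd w))"
  unfolding Ck_Suc_iff by blast


lemma pd1_add: "(\<lambda>s. f (s, snd w)) differentiable (at (fst w)) \<Longrightarrow> (\<lambda>s. g (s, snd w)) differentiable (at (fst w))
  \<Longrightarrow> pd1 (\<lambda>w. f w + g w) w = pd1 f w + pd1 g w"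
  unfolding pd1_def by simp
lemma pd2_add: "(\<lambda>t. f (fst w, t)) differentiable (at (snd w)) \<Longrightarrow> (\<lambda>t. g (fst w, t)) differentiable (at (snd w))
  \<Longrightarrow> pd2 (\<lambda>w. f w + g w) w = pd2 f w + pd2 g w"
  unfolding pd2_def by simp
lemma pd1_diff: "(\<lambda>s. f (s, snd w)) differentiable (at (fst w)) \<Longrightarrow> (\<lambda>s. g (s, snd w)) differentiable (at (fst w))
  \<Longrightarrow> pd1 (\<lambda>w. f w - g w) w = pd1 f w - pd1 g w"
  unfolding pd1_def by simp
lemma pd2_diff: "(\<lambda>t. f (fst w, t)) differentiable (at (snd w)) \<Longrightarrow> (\<lambda>t. g (fst w, t)) differentiable (at (snd w))
  \<Longrightarrow> pd2 (\<lambda>w. f w - g w) w = pd2 f w - pd2 g w"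
  unfolding pd2_def by simp
lemma pd1_mult:
  fixes f g :: "real \<times> real \<Rightarrow> real"
  shows "(\<lambda>s. f (s, snd w)) differentiable (at (fst w)) \<Longrightarrow> (\<lambda>s. g (s, snd w)) differentiable (at (fst w))
  \<Longrightarrow> pd1 (\<lambda>w. f w * g w) w = f w * pd1 g w + pd1 f w * g w"
  unfolding pd1_def by simp
lemma pd2_mult:
  fixes f g :: "real \<times> real \<Rightarrow> real"
  shows "(\<lambda>t. f (fst w, t)) differentiable (at (snd w)) \<Longrightarrow> (\<lambda>t. g (fst w, t)) differentiable (at (snd w))
  \<Longrightarrow> pd2 (\<lambda>w. f w * g w) w = f w * pd2 g w + pd2 f w * g w"
  unfolding pd2_def by simp
lemma pd1_const[simp]: "pd1 (\<lambda>w. c) = (\<lambda>w. 0)"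
  unfolding pd1_def by simp
lemma pd2_const[simp]: "pd2 (\<lambda>w. c) = (\<lambda>w. 0)"
  unfolding pd2_def by simp
lemma pd1_fst: "pd1 fst = (\<lambda>w. 1::real)"
  unfolding pd1_def by simp
lemma pd2_fst: "pd2 fst = (\<lambda>w. 0::real)"
  unfolding pd2_def by simp
lemma pd1_snd: "pd1 snd = (\<lambda>w. 0::real)"
  unfolding pd1_def by simp
lemma pd2_snd: "pd2 snd = (\<lambda>w. 1::real)"
  unfolding pd2_def by simp

lemma vd_nth:
  fixes g :: "real \<Rightarrow> real^'m"
  assumes "g differentiable (at x)"
  shows "vector_derivative (\<lambda>s. g s $ i) (at x) = vector_derivative g (at x) $ i"
proof -
  have "(g has_vector_derivative vector_derivative g (at x)) (at x)"
    using assms vector_derivative_works by blast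
  then have "((\<lambda>s. g s $ i) has_vector_derivative vector_derivative g (at x) $ i) (at x)"
    by (rule bounded_linear.has_vector_derivative[OF bounded_linear_vec_nth])
  then show ?thesis by (rule vector_derivative_at)
qed

lemma diff_nth:
  fixes g :: "real \<Rightarrow> real^'m"
  assumes "g differentiable (at x)"
  shows "(\<lambda>s. g s $ i) differentiable (at x)"
proof -
  have "(g has_vector_derivative vector_derivative g (at x)) (at x)"
    using assms vector_derivative_works by blast
  then have "((\<lambda>s. g s $ i) has_vector_derivative vector_derivative g (at x) $ i) (at x)"
    by (rule bounded_linear.has_vector_derivative[OF bounded_linear_vec_nth])
  then show ?thesis unfolding has_vector_derivative_def differentiable_def by blast
qed

lemma pd1_nth: "(\<lambda>s. (f (s, snd w) :: real^'m)) differentiable (at (fst w)) \<Longrightarrow> pd1 (\<lambda>w. f w $ i) w = pd1 f w $ i"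
  unfolding pd1_def by (rule vd_nth)
lemma pd2_nth: "(\<lambda>t. (f (fst w, t) :: real^'m)) differentiable (at (snd w)) \<Longrightarrow> pd2 (\<lambda>w. f w $ i) w = pd2 f w $ i"
  unfolding pd2_def by (rule vd_nth)

lemma Ck_const: "Ck k S (\<lambda>w. c::real)"
proof (induction k arbitrary: c)
  case 0 then show ?case unfolding Ck_0_iff by (rule continuous_on_const)
next
  case (Suc k) then show ?case unfolding Ck_Suc_iff by (simp add: continuous_on_const)
qed

lemma Ck_fst: "Ck k S (fst :: real \<times> real \<Rightarrow> real)"
proof (cases k)
  case 0
  have "continuous_on S (fst :: real \<times> real \<Rightarrow> real)" by (intro continuous_intros)
  then show ?thesis using 0 by (simp add: Ck_0_iff)
next
  case (Suc m)
  have "continuous_on S (fst :: real \<times> real \<Rightarrow> real)" by (intro continuous_intros)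
  then show ?thesis unfolding Suc Ck_Suc_iff pd1_fst pd2_fst
    by (auto intro!: Ck_const)
qed

lemma Ck_snd: "Ck k S (snd :: real \<times> real \<Rightarrow> real)"
proof (cases k)
  case 0
  have "continuous_on S (snd :: real \<times> real \<Rightarrow> real)" by (intro continuous_intros)
  then show ?thesis using 0 by (simp add: Ck_0_iff)
next
  case (Suc m)
  have "continuous_on S (snd :: real \<times> real \<Rightarrow> real)" by (intro continuous_intros)
  then show ?thesis unfolding Suc Ck_Suc_iff pd1_snd pd2_snd
    by (auto intro!: Ck_const)
qed

lemma Ck_add:
  fixes f g :: "real \<times> real \<Rightarrow> real"
  assumes "open S"
  shows "Ck k S f \<Longrightarrow> Ck k S g \<Longrightarrow> Ck k S (\<lambda>w. f w + g w)"
proof (induction k arbitrary: f g)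
  case 0 then show ?case unfolding Ck_0_iff by (intro continuous_intros)
next
  case (Suc k)
  have LD: "\<forall>w\<in>S. (\<lambda>s. f (s, snd w) + g (s, snd w)) differentiable (at (fst w))
            \<and> (\<lambda>t. f (fst w, t) + g (fst w, t)) differentiable (at (snd w))"
    using Suc.prems unfolding Ck_Suc_iff by simp
  have C: "continuous_on S (\<lambda>w. f w + g w)"
    using Suc.prems unfolding Ck_Suc_iff by (intro continuous_intros) auto
  have Q1: "Ck k S (\<lambda>w. pd1 f w + pd1 g w)"
    using Suc.prems by (intro Suc.IH) (auto simp: Ck_Suc_iff)
  have P1: "Ck k S (pd1 (\<lambda>w. f w + g w))"
  proof (rule Ck_cong[OF assms _ Q1])
    fix v assume "v \<in> S"
    then show "pd1 f v + pd1 g v = pd1 (\<lambda>w. f w + g w) v"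
      using Suc.prems by (intro pd1_add[symmetric]) (auto simp: Ck_Suc_iff)
  qed
  have Q2: "Ck k S (\<lambda>w. pd2 f w + pd2 g w)"
    using Suc.prems by (intro Suc.IH) (auto simp: Ck_Suc_iff)
  have P2: "Ck k S (pd2 (\<lambda>w. f w + g w))"
  proof (rule Ck_cong[OF assms _ Q2])
    fix v assume "v \<in> S"
    then show "pd2 f v + pd2 g v = pd2 (\<lambda>w. f w + g w) v"
      using Suc.prems by (intro pd2_add[symmetric]) (auto simp: Ck_Suc_iff)
  qed
  show ?case unfolding Ck_Suc_iff using LD C P1 P2 by simp
qed

lemma Ck_diff:
  fixes f g :: "real \<times> real \<Rightarrow> real"
  assumes "open S"
  shows "Ck k S f \<Longrightarrow> Ck k S g \<Longrightarrow> Ck k S (\<lambda>w. f w - g w)"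
proof (induction k arbitrary: f g)
  case 0 then show ?case unfolding Ck_0_iff by (intro continuous_intros)
next
  case (Suc k)
  have LD: "\<forall>w\<in>S. (\<lambda>s. f (s, snd w) - g (s, snd w)) differentiable (at (fst w))
            \<and> (\<lambda>t. f (fst w, t) - g (fst w, t)) differentiable (at (snd w))"
    using Suc.prems unfolding Ck_Suc_iff by simp
  have C: "continuous_on S (\<lambda>w. f w - g w)"
    using Suc.prems unfolding Ck_Suc_iff by (intro continuous_intros) auto
  have Q1: "Ck k S (\<lambda>w. pd1 f w - pd1 g w)"
    using Suc.prems by (intro Suc.IH) (auto simp: Ck_Suc_iff)
  have P1: "Ck k S (pd1 (\<lambda>w. f w - g w))"
  proof (rule Ck_cong[OF assms _ Q1])
    fix v assume "v \<in> S"
    then show "pd1 f v - pd1 g v = pd1 (\<lambda>w. f w - g w) v"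
      using Suc.prems by (intro pd1_diff[symmetric]) (auto simp: Ck_Suc_iff)
  qed
  have Q2: "Ck k S (\<lambda>w. pd2 f w - pd2 g w)"
    using Suc.prems by (intro Suc.IH) (auto simp: Ck_Suc_iff)
  have P2: "Ck k S (pd2 (\<lambda>w. f w - g w))"
  proof (rule Ck_cong[OF assms _ Q2])
    fix v assume "v \<in> S"
    then show "pd2 f v - pd2 g v = pd2 (\<lambda>w. f w - g w) v"
      using Suc.prems by (intro pd2_diff[symmetric]) (auto simp: Ck_Suc_iff)
  qed
  show ?case unfolding Ck_Suc_iff using LD C P1 P2 by simp
qed

lemma Ck_mult:
  fixes f g :: "real \<times> real \<Rightarrow> real"
  assumes "open S"
  shows "Ck k S f \<Longrightarrow> Ck k S g \<Longrightarrow> Ck k S (\<lambda>w. f w * g w)"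
proof (induction k arbitrary: f g)
  case 0 then show ?case unfolding Ck_0_iff by (intro continuous_intros)
next
  case (Suc k)
  have fk: "Ck k S f" "Ck k S g" using Suc.prems Ck_mono by blast+
  have LD: "\<forall>w\<in>S. (\<lambda>s. f (s, snd w) * g (s, snd w)) differentiable (at (fst w))
            \<and> (\<lambda>t. f (fst w, t) * g (fst w, t)) differentiable (at (snd w))"
    using Suc.prems unfolding Ck_Suc_iff by simp
  have C: "continuous_on S (\<lambda>w. f w * g w)"
    using Suc.prems unfolding Ck_Suc_iff by (intro continuous_intros) auto
  have Q1: "Ck k S (\<lambda>w. f w * pd1 g w + pd1 f w * g w)"
    using Suc.prems fk by (intro Ck_add[OF assms] Suc.IH) (auto simp: Ck_Suc_iff)
  have P1: "Ck k S (pd1 (\<lambda>w. f w * g w))"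
  proof (rule Ck_cong[OF assms _ Q1])
    fix v assume "v \<in> S"
    then show "f v * pd1 g v + pd1 f v * g v = pd1 (\<lambda>w. f w * g w) v"
      using Suc.prems by (intro pd1_mult[symmetric]) (auto simp: Ck_Suc_iff)
  qed
  have Q2: "Ck k S (\<lambda>w. f w * pd2 g w + pd2 f w * g w)"
    using Suc.prems fk by (intro Ck_add[OF assms] Suc.IH) (auto simp: Ck_Suc_iff)
  have P2: "Ck k S (pd2 (\<lambda>w. f w * g w))"
  proof (rule Ck_cong[OF assms _ Q2])
    fix v assume "v \<in> S"
    then show "f v * pd2 g v + pd2 f v * g v = pd2 (\<lambda>w. f w * g w) v"
      using Suc.prems by (intro pd2_mult[symmetric]) (auto simp: Ck_Suc_iff)
  qed
  show ?case unfolding Ck_Suc_iff using LD C P1 P2 by simp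
qed

lemma Ck_sum:
  fixes h :: "'i \<Rightarrow> real \<times> real \<Rightarrow> real"
  assumes "open S" "finite A"
  shows "(\<forall>i\<in>A. Ck k S (h i)) \<Longrightarrow> Ck k S (\<lambda>w. \<Sum>i\<in>A. h i w)"
  using assms(2)
proof (induction A rule: finite_induct)
  case empty then show ?case by (simp add: Ck_const)
next
  case (insert x F)
  then show ?case by (simp add: Ck_add[OF assms(1)])
qed

lemma Ck_nth:
  fixes f :: "real \<times> real \<Rightarrow> real^'m"
  assumes "open S"
  shows "Ck k S f \<Longrightarrow> Ck k S (\<lambda>w. f w $ i)"
proof (induction k arbitrary: f)
  case 0 then show ?case unfolding Ck_0_iff by (intro continuous_intros)
next
  case (Suc k)
  have LD: "\<forall>w\<in>S. (\<lambda>s. f (s, snd w) $ i) differentiable (at (fst w))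
            \<and> (\<lambda>t. f (fst w, t) $ i) differentiable (at (snd w))"
    using Suc.prems unfolding Ck_Suc_iff by (simp add: diff_nth)
  have C: "continuous_on S (\<lambda>w. f w $ i)"
    using Suc.prems unfolding Ck_Suc_iff by (intro continuous_intros) auto
  have Q1: "Ck k S (\<lambda>w. pd1 f w $ i)"
    using Suc.prems by (intro Suc.IH) (auto simp: Ck_Suc_iff)
  have P1: "Ck k S (pd1 (\<lambda>w. f w $ i))"
  proof (rule Ck_cong[OF assms _ Q1])
    fix v assume "v \<in> S"
    then show "pd1 f v $ i = pd1 (\<lambda>w. f w $ i) v"
      using Suc.prems by (intro pd1_nth[symmetric]) (auto simp: Ck_Suc_iff)
  qed
  have Q2: "Ck k S (\<lambda>w. pd2 f w $ i)"
    using Suc.prems by (intro Suc.IH) (auto simp: Ck_Suc_iff)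
  have P2: "Ck k S (pd2 (\<lambda>w. f w $ i))"
  proof (rule Ck_cong[OF assms _ Q2])
    fix v assume "v \<in> S"
    then show "pd2 f v $ i = pd2 (\<lambda>w. f w $ i) v"
      using Suc.prems by (intro pd2_nth[symmetric]) (auto simp: Ck_Suc_iff)
  qed
  show ?case unfolding Ck_Suc_iff using LD C P1 P2 by simp
qed


definition Dx :: "(real \<times> real) set \<Rightarrow> (real \<times> real \<Rightarrow> real) \<Rightarrow> real \<times> real \<Rightarrow> real" where
  "Dx S f w = (if w \<in> S then pd1 f w else 0)"
definition Dy :: "(real \<times> real) set \<Rightarrow> (real \<times> real \<Rightarrow> real) \<Rightarrow> real \<times> real \<Rightarrow> real" where
  "Dy S f w = (if w \<in> S then pd2 f w else 0)"

lemma pd1_Dx: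
  assumes "open S" "w \<in> S" "\<And>v. v \<in> S \<Longrightarrow> f v = g v"
  shows "pd1 f w = Dx S g w"
proof -
  have "pd1 f w = pd1 g w" by (rule pd1_local[OF assms(1,2)]) (rule assms(3))
  then show ?thesis using assms(2) by (simp add: Dx_def)
qed

lemma pd2_Dy:
  assumes "open S" "w \<in> S" "\<And>v. v \<in> S \<Longrightarrow> f v = g v"
  shows "pd2 f w = Dy S g w"
proof -
  have "pd2 f w = pd2 g w" by (rule pd2_local[OF assms(1,2)]) (rule assms(3))
  then show ?thesis using assms(2) by (simp add: Dy_def)
qed

lemma Dx_cong:
  assumes "open S" "\<And>v. v \<in> S \<Longrightarrow> f v = g v"
  shows "Dx S f = Dx S g"
proof (rule ext)
  fix w show "Dx S f w = Dx S g w"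
  proof (cases "w \<in> S")
    case True
    have "pd1 f w = pd1 g w" by (rule pd1_local[OF assms(1) True]) (rule assms(2))
    then show ?thesis by (simp add: Dx_def)
  qed (simp add: Dx_def)
qed

lemma Dy_cong:
  assumes "open S" "\<And>v. v \<in> S \<Longrightarrow> f v = g v"
  shows "Dy S f = Dy S g"
proof (rule ext)
  fix w show "Dy S f w = Dy S g w"
  proof (cases "w \<in> S")
    case True
    have "pd2 f w = pd2 g w" by (rule pd2_local[OF assms(1) True]) (rule assms(2))
    then show ?thesis by (simp add: Dy_def)
  qed (simp add: Dy_def)
qed

lemma Ck_Dx: assumes "open S" "Ck (Suc k) S f" shows "Ck k S (Dx S f)"
proof -
  have "Ck k S (pd1 f)" using assms(2) unfolding Ck_Suc_iff by blast
  then show ?thesis by (rule Ck_cong[OF assms(1), rotated]) (simp add: Dx_def)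
qed

lemma Ck_Dy: assumes "open S" "Ck (Suc k) S f" shows "Ck k S (Dy S f)"
proof -
  have "Ck k S (pd2 f)" using assms(2) unfolding Ck_Suc_iff by blast
  then show ?thesis by (rule Ck_cong[OF assms(1), rotated]) (simp add: Dy_def)
qed

lemma Ck_ind: assumes "open S" shows "Ck k S (\<lambda>w. if w \<in> S then (c::real) else 0)"
  by (rule Ck_cong[OF assms _ Ck_const[of k S c]]) simp

lemma Ck1_LD: "Ck 1 S f \<Longrightarrow> w \<in> S \<Longrightarrow> (\<lambda>s. f (s, snd w)) differentiable (at (fst w))
            \<and> (\<lambda>t. f (fst w, t)) differentiable (at (snd w))"
  using Ck_LD[of 0 S f w] by simp

lemma Dx_const[simp]: "Dx S (\<lambda>w. c) = (\<lambda>w. 0)" by (auto simp: Dx_def)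
lemma Dy_const[simp]: "Dy S (\<lambda>w. c) = (\<lambda>w. 0)" by (auto simp: Dy_def)
lemma Dx_fst[simp]: "Dx S fst = (\<lambda>w. if w \<in> S then 1 else 0)" by (auto simp: Dx_def pd1_fst)
lemma Dy_fst[simp]: "Dy S fst = (\<lambda>w. 0)" by (auto simp: Dy_def pd2_fst)
lemma Dx_snd[simp]: "Dx S snd = (\<lambda>w. 0)" by (auto simp: Dx_def pd1_snd)
lemma Dy_snd[simp]: "Dy S snd = (\<lambda>w. if w \<in> S then 1 else 0)" by (auto simp: Dy_def pd2_snd)
lemma Dx_ind: "open S \<Longrightarrow> Dx S (\<lambda>w. if w \<in> S then c else 0) = (\<lambda>w. 0)"
  using Dx_cong[of S "\<lambda>w. if w \<in> S then c else 0" "\<lambda>w. c"] by simp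
lemma Dy_ind: "open S \<Longrightarrow> Dy S (\<lambda>w. if w \<in> S then c else 0) = (\<lambda>w. 0)"
  using Dy_cong[of S "\<lambda>w. if w \<in> S then c else 0" "\<lambda>w. c"] by simp

lemma Dx_add: "Ck 1 S f \<Longrightarrow> Ck 1 S g \<Longrightarrow> Dx S (\<lambda>w. f w + g w) = (\<lambda>w. Dx S f w + Dx S g w)"
  by (rule ext) (auto simp: Dx_def pd1_add Ck1_LD)
lemma Dy_add: "Ck 1 S f \<Longrightarrow> Ck 1 S g \<Longrightarrow> Dy S (\<lambda>w. f w + g w) = (\<lambda>w. Dy S f w + Dy S g w)"
  by (rule ext) (auto simp: Dy_def pd2_add Ck1_LD)
lemma Dx_diff: "Ck 1 S f \<Longrightarrow> Ck 1 S g \<Longrightarrow> Dx S (\<lambda>w. f w - g w) = (\<lambda>w. Dx S f w - Dx S g w)"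
  by (rule ext) (auto simp: Dx_def pd1_diff Ck1_LD)
lemma Dy_diff: "Ck 1 S f \<Longrightarrow> Ck 1 S g \<Longrightarrow> Dy S (\<lambda>w. f w - g w) = (\<lambda>w. Dy S f w - Dy S g w)"
  by (rule ext) (auto simp: Dy_def pd2_diff Ck1_LD)
lemma Dx_mult: "Ck 1 S f \<Longrightarrow> Ck 1 S g \<Longrightarrow> Dx S (\<lambda>w. f w * g w) = (\<lambda>w. Dx S f w * g w + f w * Dx S g w)"
  by (rule ext) (auto simp: Dx_def pd1_mult Ck1_LD)
lemma Dy_mult: "Ck 1 S f \<Longrightarrow> Ck 1 S g \<Longrightarrow> Dy S (\<lambda>w. f w * g w) = (\<lambda>w. Dy S f w * g w + f w * Dy S g w)"
  by (rule ext) (auto simp: Dy_def pd2_mult Ck1_LD)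

lemma pd1_sum:
  fixes h :: "'i \<Rightarrow> real \<times> real \<Rightarrow> real"
  assumes "\<And>i. i \<in> A \<Longrightarrow> (\<lambda>s. h i (s, snd w)) differentiable (at (fst w))"
  shows "pd1 (\<lambda>w. \<Sum>i\<in>A. h i w) w = (\<Sum>i\<in>A. pd1 (h i) w)"
  unfolding pd1_def
  by (rule vector_derivative_at, rule has_vector_derivative_sum)
     (use assms vector_derivative_works in blast)
lemma pd2_sum:
  fixes h :: "'i \<Rightarrow> real \<times> real \<Rightarrow> real"
  assumes "\<And>i. i \<in> A \<Longrightarrow> (\<lambda>t. h i (fst w, t)) differentiable (at (snd w))"
  shows "pd2 (\<lambda>w. \<Sum>i\<in>A. h i w) w = (\<Sum>i\<in>A. pd2 (h i) w)"
  unfolding pd2_def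
  by (rule vector_derivative_at, rule has_vector_derivative_sum)
     (use assms vector_derivative_works in blast)

lemma Dx_sum:
  assumes "\<And>i. i \<in> A \<Longrightarrow> Ck 1 S (h i)"
  shows "Dx S (\<lambda>w. \<Sum>i\<in>A. h i w) = (\<lambda>w. \<Sum>i\<in>A. Dx S (h i) w)"
proof (rule ext)
  fix w show "Dx S (\<lambda>w. \<Sum>i\<in>A. h i w) w = (\<Sum>i\<in>A. Dx S (h i) w)"
  proof (cases "w \<in> S")
    case True
    have "pd1 (\<lambda>w. \<Sum>i\<in>A. h i w) w = (\<Sum>i\<in>A. pd1 (h i) w)"
      by (rule pd1_sum) (use Ck1_LD[OF assms True] in blast)
    then show ?thesis using True by (simp add: Dx_def)
  qed (simp add: Dx_def)
qed
lemma Dy_sum: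
  assumes "\<And>i. i \<in> A \<Longrightarrow> Ck 1 S (h i)"
  shows "Dy S (\<lambda>w. \<Sum>i\<in>A. h i w) = (\<lambda>w. \<Sum>i\<in>A. Dy S (h i) w)"
proof (rule ext)
  fix w show "Dy S (\<lambda>w. \<Sum>i\<in>A. h i w) w = (\<Sum>i\<in>A. Dy S (h i) w)"
  proof (cases "w \<in> S")
    case True
    have "pd2 (\<lambda>w. \<Sum>i\<in>A. h i w) w = (\<Sum>i\<in>A. pd2 (h i) w)"
      by (rule pd2_sum) (use Ck1_LD[OF assms True] in blast)
    then show ?thesis using True by (simp add: Dy_def)
  qed (simp add: Dy_def)
qed

lemmas D_rules = Dx_add Dy_add Dx_diff Dy_diff Dx_mult Dy_mult Dx_sum Dy_sum Dx_ind Dy_ind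
lemmas Ck_rules = Ck_const Ck_fst Ck_snd Ck_add Ck_diff Ck_mult Ck_sum Ck_Dx Ck_Dy Ck_ind

lemma Ck_le: "Ck m S f \<Longrightarrow> k \<le> m \<Longrightarrow> Ck k S f"
proof (induction m)
  case 0 then show ?case by simp
next
  case (Suc m) then show ?case using Ck_mono le_Suc_eq by blast
qed

lemma lift1: "open S \<Longrightarrow> (\<forall>v\<in>S. f v = G v) \<Longrightarrow> (\<forall>v\<in>S. pd1 f v = Dx S G v)"
  using pd1_Dx by blast
lemma lift2: "open S \<Longrightarrow> (\<forall>v\<in>S. f v = G v) \<Longrightarrow> (\<forall>v\<in>S. pd2 f v = Dy S G v)"
  using pd2_Dy by blast


lemma eig_comp:
  fixes M V :: "real^'n^'n"
  assumes symM: "transpose M = M" and eig: "\<And>k. M *v column k V = lam k *\<^sub>R column k V"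
  shows "(\<Sum>\<phi>\<in>UNIV. V$\<phi>$\<kappa> * M$\<phi>$j) = lam \<kappa> * V$j$\<kappa>"
proof -
  have "(M *v column \<kappa> V) $ j = lam \<kappa> * V$j$\<kappa>" using eig[of \<kappa>] by (simp add: column_def)
  moreover have "(M *v column \<kappa> V) $ j = (\<Sum>\<phi>\<in>UNIV. M$j$\<phi> * V$\<phi>$\<kappa>)"
    by (simp add: matrix_vector_mult_def column_def)
  moreover have "\<And>\<phi>. M$j$\<phi> = M$\<phi>$j"
    using symM by (metis transpose_def vec_lambda_beta)
  ultimately show ?thesis by (simp add: mult.commute)
qed

lemma proj_Inl:
  fixes M V :: "real^'n^'n"
  assumes symM: "transpose M = M" and eig: "\<And>k. M *v column k V = lam k *\<^sub>R column k V"
  shows "(\<Sum>\<phi>\<in>UNIV. V$\<phi>$\<kappa> * (coupled_field a b M z $ Inl \<phi>)) =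
    (\<Sum>\<phi>\<in>UNIV. V$\<phi>$\<kappa> * z$Inr \<phi>) + a * (\<Sum>\<phi>\<in>UNIV. V$\<phi>$\<kappa> * (z$Inl \<phi> * z$Inl \<phi>))
    + b * (\<Sum>\<phi>\<in>UNIV. V$\<phi>$\<kappa> * (z$Inl \<phi> * z$Inl \<phi> * z$Inl \<phi>)) + lam \<kappa> * (\<Sum>\<phi>\<in>UNIV. V$\<phi>$\<kappa> * z$Inl \<phi>)"
proof -
  have "(\<Sum>\<phi>\<in>UNIV. V$\<phi>$\<kappa> * (\<Sum>j\<in>UNIV. M$\<phi>$j * z$Inl j)) = (\<Sum>j\<in>UNIV. (\<Sum>\<phi>\<in>UNIV. V$\<phi>$\<kappa> * M$\<phi>$j) * z$Inl j)"
    by (simp add: sum_distrib_left sum_distrib_right mult.assoc) (rule sum.swap)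
  also have "\<dots> = lam \<kappa> * (\<Sum>\<phi>\<in>UNIV. V$\<phi>$\<kappa> * z$Inl \<phi>)"
    by (simp add: eig_comp[OF symM eig] sum_distrib_left mult.assoc)
  finally have M: "(\<Sum>\<phi>\<in>UNIV. V$\<phi>$\<kappa> * (\<Sum>j\<in>UNIV. M$\<phi>$j * z$Inl j)) = lam \<kappa> * (\<Sum>\<phi>\<in>UNIV. V$\<phi>$\<kappa> * z$Inl \<phi>)" .
  have "(\<Sum>\<phi>\<in>UNIV. V$\<phi>$\<kappa> * (coupled_field a b M z $ Inl \<phi>)) =
     (\<Sum>\<phi>\<in>UNIV. V$\<phi>$\<kappa> * z$Inr \<phi> + a * (V$\<phi>$\<kappa> * (z$Inl \<phi> * z$Inl \<phi>))
      + b * (V$\<phi>$\<kappa> * (z$Inl \<phi> * z$Inl \<phi> * z$Inl \<phi>)) + V$\<phi>$\<kappa> * (\<Sum>j\<in>UNIV. M$\<phi>$j * z$Inl j))"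
    by (rule sum.cong) (simp_all add: coupled_field_def power2_eq_square power3_eq_cube algebra_simps)
  also have "\<dots> = (\<Sum>\<phi>\<in>UNIV. V$\<phi>$\<kappa> * z$Inr \<phi>) + a * (\<Sum>\<phi>\<in>UNIV. V$\<phi>$\<kappa> * (z$Inl \<phi> * z$Inl \<phi>))
    + b * (\<Sum>\<phi>\<in>UNIV. V$\<phi>$\<kappa> * (z$Inl \<phi> * z$Inl \<phi> * z$Inl \<phi>)) + (\<Sum>\<phi>\<in>UNIV. V$\<phi>$\<kappa> * (\<Sum>j\<in>UNIV. M$\<phi>$j * z$Inl j))"
    by (simp add: sum.distrib sum_distrib_left)
  finally show ?thesis using M by simp
qed

lemma proj_Inr:
  "(\<Sum>\<phi>\<in>UNIV. V$\<phi>$\<kappa> * (coupled_field a b M z $ Inr \<phi>)) = - (\<Sum>\<phi>\<in>UNIV. V$\<phi>$\<kappa> * z$Inl \<phi>)"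
  by (simp add: coupled_field_def sum_negf[symmetric])


lemma Dx_uminus: "Ck 1 S f \<Longrightarrow> Dx S (\<lambda>w. - f w) = (\<lambda>w. - Dx S f w)"
proof (rule ext)
  fix w assume C: "Ck 1 S f"
  show "Dx S (\<lambda>w. - f w) w = - Dx S f w"
  proof (cases "w \<in> S")
    case True
    then have "(\<lambda>s. f (s, snd w)) differentiable (at (fst w))" using Ck1_LD[OF C] by blast
    then show ?thesis using True by (simp add: Dx_def pd1_def)
  qed (simp add: Dx_def)
qed
lemma Dy_uminus: "Ck 1 S f \<Longrightarrow> Dy S (\<lambda>w. - f w) = (\<lambda>w. - Dy S f w)"
proof (rule ext)
  fix w assume C: "Ck 1 S f"
  show "Dy S (\<lambda>w. - f w) w = - Dy S f w"
  proof (cases "w \<in> S")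
    case True
    then have "(\<lambda>t. f (fst w, t)) differentiable (at (snd w))" using Ck1_LD[OF C] by blast
    then show ?thesis using True by (simp add: Dy_def pd2_def)
  qed (simp add: Dy_def)
qed

lemma cm_lyap:
  fixes a b :: real and M V :: "real^'n^'n" and lam :: "'n \<Rightarrow> real" and k0 :: 'n
    and S :: "(real \<times> real) set" and Phi :: "real \<times> real \<Rightarrow> real^('n+'n)"
  assumes symM: "transpose M = M"
    and orthV: "transpose V ** V = mat 1"
    and orthV2: "V ** transpose V = mat 1"
    and eig: "\<And>k. M *v column k V = lam k *\<^sub>R column k V"
    and lam1: "lam k0 = 0"
    and lcm: "local_center_manifold (coupled_field a b M) (coord_u V k0) (coord_p V k0) (center_e1 V k0) (center_e2 V k0) S Phi"
  shows "lyap1 (restr_f a b M V k0 Phi) (restr_g a b M V k0 Phi) =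
     3/8 * b * (\<Sum>\<phi>\<in>UNIV. (V $ \<phi> $ k0)^4)
     + a^2 * (\<Sum>k\<in>UNIV - {k0}. (\<Sum>\<phi>\<in>UNIV. V $ \<phi> $ k * (V $ \<phi> $ k0)^2)^2 * (- lam k) / (4 * (lam k)^2 + 9))"
proof -
  let ?F = "coupled_field a b M"
  have opS: "open S" and S0: "(0,0) \<in> S" and P0: "Phi (0,0) = 0"
    and cuS: "\<And>w. w \<in> S \<Longrightarrow> coord_u V k0 (Phi w) = fst w"
    and cpS: "\<And>w. w \<in> S \<Longrightarrow> coord_p V k0 (Phi w) = snd w"
    and e1: "pd1 Phi (0,0) = center_e1 V k0" and e2: "pd2 Phi (0,0) = center_e2 V k0"
    and C3: "Ck 3 S Phi"
    and inv: "\<And>w. w \<in> S \<Longrightarrow> ?F (Phi w) = coord_u V k0 (?F (Phi w)) *\<^sub>R pd1 Phi w + coord_p V k0 (?F (Phi w)) *\<^sub>R pd2 Phi w"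
    using lcm unfolding local_center_manifold_def by auto
  define X where "X \<phi> = (\<lambda>w. Phi w $ Inl \<phi>)" for \<phi>
  define Y where "Y \<phi> = (\<lambda>w. Phi w $ Inr \<phi>)" for \<phi>
  define c where "c \<kappa> = (\<lambda>w. \<Sum>\<phi>\<in>UNIV. V$\<phi>$\<kappa> * X \<phi> w)" for \<kappa>
  define d where "d \<kappa> = (\<lambda>w. \<Sum>\<phi>\<in>UNIV. V$\<phi>$\<kappa> * Y \<phi> w)" for \<kappa>
  define G2 where "G2 \<kappa> = (\<lambda>w. \<Sum>\<phi>\<in>UNIV. V$\<phi>$\<kappa> * (X \<phi> w * X \<phi> w))" for \<kappa>
  define G3 where "G3 \<kappa> = (\<lambda>w. \<Sum>\<phi>\<in>UNIV. V$\<phi>$\<kappa> * (X \<phi> w * X \<phi> w * X \<phi> w))" for \<kappa>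
  define s where "s \<kappa> = (\<Sum>\<phi>\<in>UNIV. V$\<phi>$\<kappa> * (V$\<phi>$k0 * V$\<phi>$k0))" for \<kappa>

  have CX: "Ck k S (X \<phi>)" if "k \<le> 3" for k \<phi>
    unfolding X_def by (rule Ck_le[OF Ck_nth[OF opS C3] that])
  have CY: "Ck k S (Y \<phi>)" if "k \<le> 3" for k \<phi>
    unfolding Y_def by (rule Ck_le[OF Ck_nth[OF opS C3] that])
  have Cc: "Ck k S (c \<kappa>)" if "k \<le> 3" for k \<kappa>
    unfolding c_def using that by (intro Ck_sum[OF opS] ballI Ck_mult[OF opS] Ck_const CX) simp_all
  have Cd: "Ck k S (d \<kappa>)" if "k \<le> 3" for k \<kappa>
    unfolding d_def using that by (intro Ck_sum[OF opS] ballI Ck_mult[OF opS] Ck_const CY) simp_all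
  have CG2: "Ck k S (G2 \<kappa>)" if "k \<le> 3" for k \<kappa>
    unfolding G2_def using that by (intro Ck_sum[OF opS] ballI Ck_mult[OF opS] Ck_const CX) simp_all
  have CG3: "Ck k S (G3 \<kappa>)" if "k \<le> 3" for k \<kappa>
    unfolding G3_def using that by (intro Ck_sum[OF opS] ballI Ck_mult[OF opS] Ck_const CX) simp_all

  have LD0: "(\<lambda>s. Phi (s, snd (0,0))) differentiable (at (fst (0::real,0::real)))"
    "(\<lambda>t. Phi (fst (0,0), t)) differentiable (at (snd (0::real,0::real)))"
    using Ck_LD[of 2 S Phi "(0,0)"] C3 S0 by (simp_all add: numeral_3_eq_3)
  have X0: "X \<phi> (0,0) = 0" for \<phi> using P0 by (simp add: X_def)
  have Y0: "Y \<phi> (0,0) = 0" for \<phi> using P0 by (simp add: Y_def)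
  have XDx0: "Dx S (X \<phi>) (0,0) = V$\<phi>$k0" for \<phi>
    using S0 pd1_nth[OF LD0(1), of "Inl \<phi>"] e1 by (simp add: Dx_def X_def center_e1_def)
  have XDy0: "Dy S (X \<phi>) (0,0) = 0" for \<phi>
    using S0 pd2_nth[OF LD0(2), of "Inl \<phi>"] e2 by (simp add: Dy_def X_def center_e2_def)
  have YDx0: "Dx S (Y \<phi>) (0,0) = 0" for \<phi>
    using S0 pd1_nth[OF LD0(1), of "Inr \<phi>"] e1 by (simp add: Dx_def Y_def center_e1_def)
  have YDy0: "Dy S (Y \<phi>) (0,0) = V$\<phi>$k0" for \<phi>
    using S0 pd2_nth[OF LD0(2), of "Inr \<phi>"] e2 by (simp add: Dy_def Y_def center_e2_def)
  have orth: "(\<Sum>\<phi>\<in>UNIV. V$\<phi>$\<kappa> * V$\<phi>$\<mu>) = (if \<kappa> = \<mu> then 1 else 0)" for \<kappa> \<mu>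
  proof -
    have "(transpose V ** V) $ \<kappa> $ \<mu> = (\<Sum>\<phi>\<in>UNIV. V$\<phi>$\<kappa> * V$\<phi>$\<mu>)"
      by (simp add: matrix_matrix_mult_def transpose_def)
    then show ?thesis using orthV by (simp add: mat_def)
  qed
  have orth2: "(\<Sum>\<kappa>\<in>UNIV. V$\<phi>$\<kappa> * V$\<psi>$\<kappa>) = (if \<phi> = \<psi> then 1 else 0)" for \<phi> \<psi>
  proof -
    have "(V ** transpose V) $ \<phi> $ \<psi> = (\<Sum>\<kappa>\<in>UNIV. V$\<phi>$\<kappa> * V$\<psi>$\<kappa>)"
      by (simp add: matrix_matrix_mult_def transpose_def)
    then show ?thesis using orthV2 by (simp add: mat_def)
  qed
  have Xc: "X \<phi> = (\<lambda>w. \<Sum>\<kappa>\<in>UNIV. V$\<phi>$\<kappa> * c \<kappa> w)" for \<phi>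
  proof (rule ext)
    fix w
    have "(\<Sum>\<kappa>\<in>UNIV. V$\<phi>$\<kappa> * c \<kappa> w) = (\<Sum>\<kappa>\<in>UNIV. \<Sum>\<psi>\<in>UNIV. V$\<phi>$\<kappa> * V$\<psi>$\<kappa> * X \<psi> w)"
      by (simp add: c_def sum_distrib_left mult.assoc)
    also have "\<dots> = (\<Sum>\<psi>\<in>UNIV. (\<Sum>\<kappa>\<in>UNIV. V$\<phi>$\<kappa> * V$\<psi>$\<kappa>) * X \<psi> w)"
      by (subst sum.swap) (simp add: sum_distrib_right)
    also have "\<dots> = (\<Sum>\<psi>\<in>UNIV. if \<phi> = \<psi> then X \<psi> w else 0)"
      by (rule sum.cong) (simp_all add: orth2)
    also have "\<dots> = X \<phi> w" by simp
    finally show "X \<phi> w = (\<Sum>\<kappa>\<in>UNIV. V$\<phi>$\<kappa> * c \<kappa> w)" by simp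
  qed
  have c0: "c \<kappa> (0,0) = 0" for \<kappa> by (simp add: c_def X0)
  have d0: "d \<kappa> (0,0) = 0" for \<kappa> by (simp add: d_def Y0)
  have cDx: "Dx S (c \<kappa>) = (\<lambda>w. \<Sum>\<phi>\<in>UNIV. V$\<phi>$\<kappa> * Dx S (X \<phi>) w)" for \<kappa>
    unfolding c_def by (simp add: D_rules Ck_rules opS CX)
  have cDy: "Dy S (c \<kappa>) = (\<lambda>w. \<Sum>\<phi>\<in>UNIV. V$\<phi>$\<kappa> * Dy S (X \<phi>) w)" for \<kappa>
    unfolding c_def by (simp add: D_rules Ck_rules opS CX)
  have dDx: "Dx S (d \<kappa>) = (\<lambda>w. \<Sum>\<phi>\<in>UNIV. V$\<phi>$\<kappa> * Dx S (Y \<phi>) w)" for \<kappa>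
    unfolding d_def by (simp add: D_rules Ck_rules opS CY)
  have dDy: "Dy S (d \<kappa>) = (\<lambda>w. \<Sum>\<phi>\<in>UNIV. V$\<phi>$\<kappa> * Dy S (Y \<phi>) w)" for \<kappa>
    unfolding d_def by (simp add: D_rules Ck_rules opS CY)
  have cDx0: "Dx S (c \<kappa>) (0,0) = (if \<kappa> = k0 then 1 else 0)" for \<kappa>
    by (simp add: cDx XDx0 orth)
  have cDy0: "Dy S (c \<kappa>) (0,0) = 0" for \<kappa>
    by (simp add: cDy XDy0)
  have dDx0: "Dx S (d \<kappa>) (0,0) = 0" for \<kappa>
    by (simp add: dDx YDx0)
  have dDy0: "Dy S (d \<kappa>) (0,0) = (if \<kappa> = k0 then 1 else 0)" for \<kappa>
    by (simp add: dDy YDy0 orth)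

  have G2v: "G2 \<kappa> (0,0) = 0" "Dx S (G2 \<kappa>) (0,0) = 0" "Dy S (G2 \<kappa>) (0,0) = 0"
    "Dx S (Dx S (G2 \<kappa>)) (0,0) = 2 * s \<kappa>" "Dy S (Dy S (G2 \<kappa>)) (0,0) = 0"
    "Dx S (Dy S (G2 \<kappa>)) (0,0) = 0" "Dy S (Dx S (G2 \<kappa>)) (0,0) = 0" for \<kappa>
    unfolding G2_def s_def
    by (simp_all add: D_rules Ck_rules opS CX S0 X0 XDx0 XDy0 sum_distrib_left algebra_simps)
  have G3v: "G3 \<kappa> (0,0) = 0" "Dx S (G3 \<kappa>) (0,0) = 0" "Dy S (G3 \<kappa>) (0,0) = 0"
    "Dx S (Dx S (G3 \<kappa>)) (0,0) = 0" "Dy S (Dy S (G3 \<kappa>)) (0,0) = 0"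
    "Dx S (Dy S (G3 \<kappa>)) (0,0) = 0" "Dy S (Dx S (G3 \<kappa>)) (0,0) = 0" for \<kappa>
    unfolding G3_def
    by (simp_all add: D_rules Ck_rules opS CX S0 X0 XDx0 XDy0)

  have LDw: "(\<lambda>s. Phi (s, snd w)) differentiable (at (fst w))" "(\<lambda>t. Phi (fst w, t)) differentiable (at (snd w))"
    if "w \<in> S" for w
    using Ck_LD[of 2 S Phi w] C3 that by (simp_all add: numeral_3_eq_3)
  have invc: "?F (Phi w) $ Inl \<phi> = coord_u V k0 (?F (Phi w)) * Dx S (X \<phi>) w + coord_p V k0 (?F (Phi w)) * Dy S (X \<phi>) w"
    "?F (Phi w) $ Inr \<phi> = coord_u V k0 (?F (Phi w)) * Dx S (Y \<phi>) w + coord_p V k0 (?F (Phi w)) * Dy S (Y \<phi>) w"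
    if "w \<in> S" for w \<phi>
  proof -
    have "?F (Phi w) $ i = coord_u V k0 (?F (Phi w)) * pd1 Phi w $ i + coord_p V k0 (?F (Phi w)) * pd2 Phi w $ i" for i
      using arg_cong[OF inv[OF that], of "\<lambda>z. z $ i"] by simp
    moreover have "pd1 Phi w $ i = pd1 (\<lambda>w. Phi w $ i) w" "pd2 Phi w $ i = pd2 (\<lambda>w. Phi w $ i) w" for i
      using pd1_nth[OF LDw(1)[OF that]] pd2_nth[OF LDw(2)[OF that]] by simp_all
    ultimately show "?F (Phi w) $ Inl \<phi> = coord_u V k0 (?F (Phi w)) * Dx S (X \<phi>) w + coord_p V k0 (?F (Phi w)) * Dy S (X \<phi>) w"
      "?F (Phi w) $ Inr \<phi> = coord_u V k0 (?F (Phi w)) * Dx S (Y \<phi>) w + coord_p V k0 (?F (Phi w)) * Dy S (Y \<phi>) w"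
      using that by (simp_all add: Dx_def Dy_def X_def Y_def)
  qed
  have projl: "(\<Sum>\<phi>\<in>UNIV. V$\<phi>$\<kappa> * (?F (Phi w) $ Inl \<phi>)) = d \<kappa> w + a * G2 \<kappa> w + b * G3 \<kappa> w + lam \<kappa> * c \<kappa> w" for w \<kappa>
    using proj_Inl[OF symM eig, of \<kappa> a b "Phi w"] by (simp add: c_def d_def G2_def G3_def X_def Y_def)
  have projr: "(\<Sum>\<phi>\<in>UNIV. V$\<phi>$\<kappa> * (?F (Phi w) $ Inr \<phi>)) = - c \<kappa> w" for w \<kappa>
    using proj_Inr[of V \<kappa> a b M "Phi w"] by (simp add: c_def X_def)
  have ck0: "c k0 w = fst w" if "w \<in> S" for w
    using cuS[OF that] by (simp add: c_def X_def coord_u_def)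
  have dk0: "d k0 w = snd w" if "w \<in> S" for w
    using cpS[OF that] by (simp add: d_def Y_def coord_p_def)
  have QS: "coord_u V k0 (?F (Phi w)) = snd w + a * G2 k0 w + b * G3 k0 w" if "w \<in> S" for w
    using projl[of k0 w] lam1 dk0[OF that] by (simp add: coord_u_def)
  have RS: "coord_p V k0 (?F (Phi w)) = - fst w" if "w \<in> S" for w
    using projr[of k0 w] ck0[OF that] by (simp add: coord_p_def)
  have E: "d \<kappa> w + lam \<kappa> * c \<kappa> w + a * G2 \<kappa> w + b * G3 \<kappa> w =
     (snd w + a * G2 k0 w + b * G3 k0 w) * Dx S (c \<kappa>) w - fst w * Dy S (c \<kappa>) w" if "w \<in> S" for w \<kappa>
  proof -
    have "(\<Sum>\<phi>\<in>UNIV. V$\<phi>$\<kappa> * (?F (Phi w) $ Inl \<phi>)) =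
      (\<Sum>\<phi>\<in>UNIV. V$\<phi>$\<kappa> * ((snd w + a * G2 k0 w + b * G3 k0 w) * Dx S (X \<phi>) w - fst w * Dy S (X \<phi>) w))"
      using invc(1)[OF that] QS[OF that] RS[OF that] by simp
    also have "\<dots> = (snd w + a * G2 k0 w + b * G3 k0 w) * Dx S (c \<kappa>) w - fst w * Dy S (c \<kappa>) w"
      by (simp add: cDx cDy sum_distrib_left sum_subtractf algebra_simps)
    finally show ?thesis using projl[of \<kappa> w] by simp
  qed
  have Fe: "- c \<kappa> w =
     (snd w + a * G2 k0 w + b * G3 k0 w) * Dx S (d \<kappa>) w - fst w * Dy S (d \<kappa>) w" if "w \<in> S" for w \<kappa>
  proof -
    have "(\<Sum>\<phi>\<in>UNIV. V$\<phi>$\<kappa> * (?F (Phi w) $ Inr \<phi>)) =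
      (\<Sum>\<phi>\<in>UNIV. V$\<phi>$\<kappa> * ((snd w + a * G2 k0 w + b * G3 k0 w) * Dx S (Y \<phi>) w - fst w * Dy S (Y \<phi>) w))"
      using invc(2)[OF that] QS[OF that] RS[OF that] by simp
    also have "\<dots> = (snd w + a * G2 k0 w + b * G3 k0 w) * Dx S (d \<kappa>) w - fst w * Dy S (d \<kappa>) w"
      by (simp add: dDx dDy sum_distrib_left sum_subtractf algebra_simps)
    finally show ?thesis using projr[of \<kappa> w] by simp
  qed

  note rules = D_rules Dx_uminus Dy_uminus Ck_rules opS S0 Cc Cd CG2 CG3 c0 d0 cDx0 cDy0 dDx0 dDy0 G2v G3v
  have EDx: "Dx S (\<lambda>w. d \<kappa> w + lam \<kappa> * c \<kappa> w + a * G2 \<kappa> w + b * G3 \<kappa> w) =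
     Dx S (\<lambda>w. (snd w + a * G2 k0 w + b * G3 k0 w) * Dx S (c \<kappa>) w - fst w * Dy S (c \<kappa>) w)" for \<kappa>
    by (rule Dx_cong[OF opS]) (rule E)
  have EDy: "Dy S (\<lambda>w. d \<kappa> w + lam \<kappa> * c \<kappa> w + a * G2 \<kappa> w + b * G3 \<kappa> w) =
     Dy S (\<lambda>w. (snd w + a * G2 k0 w + b * G3 k0 w) * Dx S (c \<kappa>) w - fst w * Dy S (c \<kappa>) w)" for \<kappa>
    by (rule Dy_cong[OF opS]) (rule E)
  have FDx: "Dx S (\<lambda>w. - c \<kappa> w) =
     Dx S (\<lambda>w. (snd w + a * G2 k0 w + b * G3 k0 w) * Dx S (d \<kappa>) w - fst w * Dy S (d \<kappa>) w)" for \<kappa>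
    by (rule Dx_cong[OF opS]) (rule Fe)
  have FDy: "Dy S (\<lambda>w. - c \<kappa> w) =
     Dy S (\<lambda>w. (snd w + a * G2 k0 w + b * G3 k0 w) * Dx S (d \<kappa>) w - fst w * Dy S (d \<kappa>) w)" for \<kappa>
    by (rule Dy_cong[OF opS]) (rule Fe)

  have eq1: "Dx S (Dx S (d \<kappa>)) (0,0) + lam \<kappa> * Dx S (Dx S (c \<kappa>)) (0,0) + 2 * a * s \<kappa> = - 2 * Dx S (Dy S (c \<kappa>)) (0,0)"
    if "\<kappa> \<noteq> k0" for \<kappa>
    using arg_cong[OF EDx[of \<kappa>], of "\<lambda>h. Dx S h (0,0)"] that by (simp add: rules)
  have eq2: "Dy S (Dy S (d \<kappa>)) (0,0) + lam \<kappa> * Dy S (Dy S (c \<kappa>)) (0,0) = 2 * Dy S (Dx S (c \<kappa>)) (0,0)"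
    if "\<kappa> \<noteq> k0" for \<kappa>
    using arg_cong[OF EDy[of \<kappa>], of "\<lambda>h. Dy S h (0,0)"] that by (simp add: rules)
  have eq3: "Dx S (Dy S (d \<kappa>)) (0,0) + lam \<kappa> * Dx S (Dy S (c \<kappa>)) (0,0) = Dx S (Dx S (c \<kappa>)) (0,0) - Dy S (Dy S (c \<kappa>)) (0,0)"
    if "\<kappa> \<noteq> k0" for \<kappa>
    using arg_cong[OF EDy[of \<kappa>], of "\<lambda>h. Dx S h (0,0)"] that by (simp add: rules)
  have eq4: "Dy S (Dx S (d \<kappa>)) (0,0) + lam \<kappa> * Dy S (Dx S (c \<kappa>)) (0,0) = Dx S (Dx S (c \<kappa>)) (0,0) - Dy S (Dy S (c \<kappa>)) (0,0)"
    if "\<kappa> \<noteq> k0" for \<kappa>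
    using arg_cong[OF EDx[of \<kappa>], of "\<lambda>h. Dy S h (0,0)"] that by (simp add: rules)
  have eq5: "Dx S (Dx S (c \<kappa>)) (0,0) = 2 * Dx S (Dy S (d \<kappa>)) (0,0)"
    if "\<kappa> \<noteq> k0" for \<kappa>
    using arg_cong[OF FDx[of \<kappa>], of "\<lambda>h. Dx S h (0,0)"] that by (simp add: rules)
  have eq6: "- Dy S (Dy S (c \<kappa>)) (0,0) = 2 * Dy S (Dx S (d \<kappa>)) (0,0)"
    if "\<kappa> \<noteq> k0" for \<kappa>
    using arg_cong[OF FDy[of \<kappa>], of "\<lambda>h. Dy S h (0,0)"] that by (simp add: rules)
  have eq7: "- Dx S (Dy S (c \<kappa>)) (0,0) = Dx S (Dx S (d \<kappa>)) (0,0) - Dy S (Dy S (d \<kappa>)) (0,0)"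
    if "\<kappa> \<noteq> k0" for \<kappa>
    using arg_cong[OF FDy[of \<kappa>], of "\<lambda>h. Dx S h (0,0)"] that by (simp add: rules)
  have eq8: "- Dy S (Dx S (c \<kappa>)) (0,0) = Dx S (Dx S (d \<kappa>)) (0,0) - Dy S (Dy S (d \<kappa>)) (0,0)"
    if "\<kappa> \<noteq> k0" for \<kappa>
    using arg_cong[OF FDx[of \<kappa>], of "\<lambda>h. Dy S h (0,0)"] that by (simp add: rules)
  have sol: "Dy S (Dy S (c \<kappa>)) (0,0) = - Dx S (Dx S (c \<kappa>)) (0,0)"
     "Dx S (Dx S (c \<kappa>)) (0,0) * (9 + 4 * (lam \<kappa>)^2) = - 4 * lam \<kappa> * a * s \<kappa>"
    if "\<kappa> \<noteq> k0" for \<kappa>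
  proof -
    define cxx where "cxx = Dx S (Dx S (c \<kappa>)) (0,0)"
    define cyy where "cyy = Dy S (Dy S (c \<kappa>)) (0,0)"
    define cxy where "cxy = Dx S (Dy S (c \<kappa>)) (0,0)"
    define cyx where "cyx = Dy S (Dx S (c \<kappa>)) (0,0)"
    define dxx where "dxx = Dx S (Dx S (d \<kappa>)) (0,0)"
    define dyy where "dyy = Dy S (Dy S (d \<kappa>)) (0,0)"
    define dxy where "dxy = Dx S (Dy S (d \<kappa>)) (0,0)"
    define dyx where "dyx = Dy S (Dx S (d \<kappa>)) (0,0)"
    define l where "l = lam \<kappa>"
    have h1: "dxx + l * cxx + 2 * a * s \<kappa> = - 2 * cxy" using eq1[OF that] by (simp add: cxx_def cxy_def dxx_def l_def)
    have h2: "dyy + l * cyy = 2 * cyx" using eq2[OF that] by (simp add: cyy_def cyx_def dyy_def l_def)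
    have h3: "dxy + l * cxy = cxx - cyy" using eq3[OF that] by (simp add: cxx_def cyy_def cxy_def dxy_def l_def)
    have h4: "dyx + l * cyx = cxx - cyy" using eq4[OF that] by (simp add: cxx_def cyy_def cyx_def dyx_def l_def)
    have h5: "cxx = 2 * dxy" using eq5[OF that] by (simp add: cxx_def dxy_def)
    have h6: "- cyy = 2 * dyx" using eq6[OF that] by (simp add: cyy_def dyx_def)
    have h7: "- cxy = dxx - dyy" using eq7[OF that] by (simp add: cxy_def dxx_def dyy_def)
    have h8: "- cyx = dxx - dyy" using eq8[OF that] by (simp add: cyx_def dxx_def dyy_def)
    have "cxy = cyx" using h7 h8 by linarith
    then have "dxy = dyx" using h3 h4 by simp
    then have r1: "cyy = - cxx" using h5 h6 by linarith
    have r2: "l * cxy = 3/2 * cxx" using h3 h5 r1 by linarith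
    have r3: "3 * cxy + 2 * l * cxx + 2 * a * s \<kappa> = 0"
      using h1 h2 h7 \<open>cxy = cyx\<close> r1 by (simp add: algebra_simps; linarith)
    have "l * (3 * cxy + 2 * l * cxx + 2 * a * s \<kappa>) = 0" using r3 by simp
    then have "3 * (l * cxy) + 2 * l^2 * cxx + 2 * l * a * s \<kappa> = 0" by (simp add: algebra_simps power2_eq_square)
    then have "3 * (3/2 * cxx) + 2 * l^2 * cxx + 2 * l * a * s \<kappa> = 0" using r2 by simp
    then have "cxx * (9 + 4 * l^2) = - 4 * l * a * s \<kappa>" by (simp add: algebra_simps; linarith)
    then show "Dx S (Dx S (c \<kappa>)) (0,0) * (9 + 4 * (lam \<kappa>)^2) = - 4 * lam \<kappa> * a * s \<kappa>"
      by (simp add: cxx_def l_def)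
    show "Dy S (Dy S (c \<kappa>)) (0,0) = - Dx S (Dx S (c \<kappa>)) (0,0)" using r1 by (simp add: cxx_def cyy_def)
  qed
  note rules0 = D_rules Dx_uminus Dy_uminus Ck_rules opS S0 CX X0 XDx0 XDy0
  have ck0D: "Dx S (Dx S (c k0)) = (\<lambda>w. 0)" "Dy S (Dy S (c k0)) = (\<lambda>w. 0)"
  proof -
    have "Dx S (c k0) = Dx S fst" by (rule Dx_cong[OF opS]) (rule ck0)
    then show "Dx S (Dx S (c k0)) = (\<lambda>w. 0)" by (simp add: Dx_ind[OF opS])
    have "Dy S (c k0) = Dy S fst" by (rule Dy_cong[OF opS]) (rule ck0)
    then show "Dy S (Dy S (c k0)) = (\<lambda>w. 0)" by simp
  qed
  have Xxx: "Dx S (Dx S (X \<phi>)) (0,0) = (\<Sum>\<kappa>\<in>UNIV. V$\<phi>$\<kappa> * Dx S (Dx S (c \<kappa>)) (0,0))" for \<phi>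
    by (subst Xc) (simp add: rules)
  have Xyy: "Dy S (Dy S (X \<phi>)) (0,0) = (\<Sum>\<kappa>\<in>UNIV. V$\<phi>$\<kappa> * Dy S (Dy S (c \<kappa>)) (0,0))" for \<phi>
    by (subst Xc) (simp add: rules)
  have T1: "Dx S (Dx S (Dx S (G2 k0))) (0,0) = 6 * (\<Sum>\<phi>\<in>UNIV. V$\<phi>$k0 * (V$\<phi>$k0 * Dx S (Dx S (X \<phi>)) (0,0)))"
    unfolding G2_def by (simp add: rules0 sum_distrib_left algebra_simps)
  have T2: "Dx S (Dy S (Dy S (G2 k0))) (0,0) = 2 * (\<Sum>\<phi>\<in>UNIV. V$\<phi>$k0 * (V$\<phi>$k0 * Dy S (Dy S (X \<phi>)) (0,0)))"
    unfolding G2_def by (simp add: rules0 sum_distrib_left algebra_simps)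
  have T3: "Dx S (Dx S (Dx S (G3 k0))) (0,0) = 6 * (\<Sum>\<phi>\<in>UNIV. (V$\<phi>$k0)^4)"
    unfolding G3_def by (simp add: rules0 sum_distrib_left algebra_simps power4_eq_xxxx)
  have T4: "Dx S (Dy S (Dy S (G3 k0))) (0,0) = 0"
    unfolding G3_def by (simp add: rules0)
  have sw: "(\<Sum>\<phi>\<in>UNIV. V$\<phi>$k0 * (V$\<phi>$k0 * (\<Sum>\<kappa>\<in>UNIV. V$\<phi>$\<kappa> * h \<kappa>))) = (\<Sum>\<kappa>\<in>UNIV. s \<kappa> * h \<kappa>)" for h
  proof -
    have "(\<Sum>\<phi>\<in>UNIV. V$\<phi>$k0 * (V$\<phi>$k0 * (\<Sum>\<kappa>\<in>UNIV. V$\<phi>$\<kappa> * h \<kappa>)))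
        = (\<Sum>\<phi>\<in>UNIV. \<Sum>\<kappa>\<in>UNIV. V$\<phi>$\<kappa> * (V$\<phi>$k0 * V$\<phi>$k0) * h \<kappa>)"
      by (simp add: sum_distrib_left algebra_simps)
    also have "\<dots> = (\<Sum>\<kappa>\<in>UNIV. \<Sum>\<phi>\<in>UNIV. V$\<phi>$\<kappa> * (V$\<phi>$k0 * V$\<phi>$k0) * h \<kappa>)"
      by (rule sum.swap)
    also have "\<dots> = (\<Sum>\<kappa>\<in>UNIV. s \<kappa> * h \<kappa>)"
      by (simp add: s_def sum_distrib_right)
    finally show ?thesis .
  qed
  have fS: "restr_f a b M V k0 Phi v = (\<lambda>w. a * G2 k0 w + b * G3 k0 w) v" if "v \<in> S" for v
    using QS[OF that] by (simp add: restr_f_def)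
  have gS: "restr_g a b M V k0 Phi v = (\<lambda>w. 0) v" if "v \<in> S" for v
    using RS[OF that] by (simp add: restr_g_def)
  define fb where "fb = (\<lambda>w. a * G2 k0 w + b * G3 k0 w)"
  define gb where "gb = (\<lambda>w::real\<times>real. 0::real)"
  let ?f = "restr_f a b M V k0 Phi" and ?g = "restr_g a b M V k0 Phi"
  have f0: "\<forall>v\<in>S. ?f v = fb v" using fS by (simp add: fb_def)
  have g0: "\<forall>v\<in>S. ?g v = gb v" using gS by (simp add: gb_def)
  note f1 = lift1[OF opS f0] and f2 = lift2[OF opS f0]
  note f11 = lift1[OF opS f1] and f22 = lift2[OF opS f2] and f12 = lift1[OF opS f2]
  note f111 = lift1[OF opS f11] and f122 = lift1[OF opS f22]
  note g1 = lift1[OF opS g0] and g2 = lift2[OF opS g0]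
  note g11 = lift1[OF opS g1] and g22 = lift2[OF opS g2] and g12 = lift1[OF opS g2]
  note g112 = lift1[OF opS g12] and g222 = lift2[OF opS g22]
  have L1: "lyap1 ?f ?g = 1/16 * (a * Dx S (Dx S (Dx S (G2 k0))) (0,0) + b * Dx S (Dx S (Dx S (G3 k0))) (0,0)
      + a * Dx S (Dy S (Dy S (G2 k0))) (0,0) + b * Dx S (Dy S (Dy S (G3 k0))) (0,0))"
    unfolding lyap1_def Let_def
    using f11 f22 f12 f111 f122 g11 g22 g12 g112 g222 S0
    by (simp add: fb_def gb_def rules G2v G3v)
  have key: "s \<kappa> * (6 * Dx S (Dx S (c \<kappa>)) (0,0) + 2 * Dy S (Dy S (c \<kappa>)) (0,0)) =
     (if \<kappa> = k0 then 0 else 16 * a * (s \<kappa>)^2 * (- lam \<kappa>) / (4 * (lam \<kappa>)^2 + 9))" for \<kappa>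
  proof (cases "\<kappa> = k0")
    case True then show ?thesis by (simp add: ck0D)
  next
    case False
    have pos: "4 * (lam \<kappa>)^2 + 9 \<noteq> 0" by (simp add: add_nonneg_eq_0_iff)
    have "Dx S (Dx S (c \<kappa>)) (0,0) = - 4 * lam \<kappa> * a * s \<kappa> / (4 * (lam \<kappa>)^2 + 9)"
      using sol(2)[OF False] pos by (simp add: field_simps)
    then show ?thesis using sol(1)[OF False] False pos by (simp add: field_simps power2_eq_square)
  qed
  have "lyap1 ?f ?g = 3/8 * b * (\<Sum>\<phi>\<in>UNIV. (V$\<phi>$k0)^4)
     + a / 16 * (\<Sum>\<kappa>\<in>UNIV. s \<kappa> * (6 * Dx S (Dx S (c \<kappa>)) (0,0) + 2 * Dy S (Dy S (c \<kappa>)) (0,0)))"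
    unfolding L1 T1 T2 T3 T4 Xxx Xyy sw by (simp add: algebra_simps sum.distrib sum_distrib_left)
  also have "\<dots> = 3/8 * b * (\<Sum>\<phi>\<in>UNIV. (V$\<phi>$k0)^4)
     + a / 16 * (\<Sum>\<kappa>\<in>UNIV - {k0}. 16 * a * (s \<kappa>)^2 * (- lam \<kappa>) / (4 * (lam \<kappa>)^2 + 9))"
    unfolding key by (simp add: sum.If_cases Diff_eq Compl_eq)
  also have "\<dots> = 3/8 * b * (\<Sum>\<phi>\<in>UNIV. (V $ \<phi> $ k0)^4)
     + a^2 * (\<Sum>k\<in>UNIV - {k0}. (\<Sum>\<phi>\<in>UNIV. V $ \<phi> $ k * (V $ \<phi> $ k0)^2)^2 * (- lam k) / (4 * (lam k)^2 + 9))"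
    by (simp add: s_def sum_distrib_left power2_eq_square algebra_simps)
  finally show ?thesis .
qed


lemma det_rank:
  fixes A :: "'a::comm_ring_1^'n^'n" and r :: "'n \<Rightarrow> nat"
  assumes ld: "\<And>i j. i \<noteq> j \<Longrightarrow> r j \<le> r i \<Longrightarrow> A$i$j = 0"
  shows "det A = prod (\<lambda>i. A$i$i) (UNIV::'n set)"
proof -
  let ?U = "UNIV:: 'n set"
  let ?PU = "{p. p permutes ?U}"
  let ?pp = "\<lambda>p. of_int (sign p) * prod (\<lambda>i. A$i$p i) (UNIV :: 'n set)"
  have fU: "finite ?U" by simp
  from finite_permutations[OF fU] have fPU: "finite ?PU" .
  have id0: "{id} \<subseteq> ?PU" by (auto simp: permutes_id)
  have p0: "\<forall>p \<in> ?PU - {id}. ?pp p = 0"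
  proof
    fix p assume p: "p \<in> ?PU - {id}"
    then have pU: "p permutes ?U" and pid: "p \<noteq> id" by auto
    have "\<exists>i \<in> ?U. A$i$p i = 0"
    proof (rule ccontr)
      assume "\<not> (\<exists>i \<in> ?U. A$i$p i = 0)"
      then have nz: "\<And>i. A$i$p i \<noteq> 0" by auto
      have lt: "r i < r (p i)" if "p i \<noteq> i" for i
      proof (rule ccontr)
        assume "\<not> r i < r (p i)"
        then have "r (p i) \<le> r i" by simp
        then have "A$i$p i = 0" by (rule ld[rotated]) (use that in auto)
        then show False using nz by blast
      qed
      have le: "r i \<le> r (p i)" for i
        using lt[of i] by (cases "p i = i") auto
      obtain i0 where i0: "p i0 \<noteq> i0" using pid by (metis eq_id_iff)
      have "sum r ?U < sum (r \<circ> p) ?U"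
        by (rule sum_strict_mono_ex1) (use le lt[OF i0] in auto)
      also have "sum (r \<circ> p) ?U = sum r (p ` ?U)"
        by (rule sum.reindex[symmetric]) (use permutes_inj[OF pU] in auto)
      also have "p ` ?U = ?U" by (rule permutes_image[OF pU])
      finally show False by simp
    qed
    with prod_zero[OF fU] show "?pp p = 0" by force
  qed
  from sum.mono_neutral_cong_left[OF fPU id0 p0] show ?thesis
    unfolding det_def by (simp add: sign_id)
qed

lemma sum_plus: "(\<Sum>u\<in>(UNIV::('a::finite + 'b::finite) set). f u) = (\<Sum>i\<in>UNIV. f (Inl i)) + (\<Sum>j\<in>UNIV. f (Inr j))"
  using sum.Plus[of "UNIV::'a set" "UNIV::'b set" f] by (simp add: comp_def)
lemma prod_plus: "(\<Prod>u\<in>(UNIV::('a::finite + 'b::finite) set). f u) = (\<Prod>i\<in>UNIV. f (Inl i)) * (\<Prod>j\<in>UNIV. f (Inr j))"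
  using prod.Plus[of "UNIV::'a set" "UNIV::'b set" f] by (simp add: comp_def)

definition blk :: "('n::finite \<Rightarrow> 'n \<Rightarrow> 'a) \<Rightarrow> ('n \<Rightarrow> 'n \<Rightarrow> 'a) \<Rightarrow> ('n \<Rightarrow> 'n \<Rightarrow> 'a) \<Rightarrow> ('n \<Rightarrow> 'n \<Rightarrow> 'a) \<Rightarrow> 'a^('n+'n)^('n+'n)" where
  "blk A B C D = (\<chi> r t. case r of Inl i \<Rightarrow> (case t of Inl j \<Rightarrow> A i j | Inr j \<Rightarrow> B i j)
                                 | Inr i \<Rightarrow> (case t of Inl j \<Rightarrow> C i j | Inr j \<Rightarrow> D i j))"

definition mm :: "('n::finite \<Rightarrow> 'n \<Rightarrow> 'a::comm_ring_1) \<Rightarrow> ('n \<Rightarrow> 'n \<Rightarrow> 'a) \<Rightarrow> 'n \<Rightarrow> 'n \<Rightarrow> 'a" where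
  "mm A B i j = (\<Sum>k\<in>UNIV. A i k * B k j)"

definition idm :: "'n \<Rightarrow> 'n \<Rightarrow> 'a::comm_ring_1" where "idm i j = (if i = j then 1 else 0)"
definition zm :: "'n \<Rightarrow> 'n \<Rightarrow> 'a::comm_ring_1" where "zm i j = 0"
definition sm :: "'a::comm_ring_1 \<Rightarrow> 'n \<Rightarrow> 'n \<Rightarrow> 'a" where "sm x i j = (if i = j then x else 0)"

lemma blk_mult:
  fixes A B C D A' B' C' D' :: "'n::finite \<Rightarrow> 'n \<Rightarrow> 'a::comm_ring_1"
  shows "blk A B C D ** blk A' B' C' D' =
    blk (\<lambda>i j. mm A A' i j + mm B C' i j) (\<lambda>i j. mm A B' i j + mm B D' i j)
        (\<lambda>i j. mm C A' i j + mm D C' i j) (\<lambda>i j. mm C B' i j + mm D D' i j)"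
  by (simp add: blk_def matrix_matrix_mult_def mm_def vec_eq_iff sum_plus split: sum.split)

lemma if_mult_z: "(if P then a else 0) * b = (if P then a * b else (0::'a::comm_ring_1))" by simp
lemma mult_if_z: "b * (if P then a else 0) = (if P then b * a else (0::'a::comm_ring_1))" by simp

lemma mm_idm_left[simp]: "mm idm A = A" by (simp add: mm_def idm_def fun_eq_iff if_mult_z mult_if_z)
lemma mm_idm_right[simp]: "mm A idm = A" by (simp add: mm_def idm_def fun_eq_iff if_mult_z mult_if_z)
lemma mm_zm_left[simp]: "mm zm A = zm" by (simp add: mm_def zm_def fun_eq_iff)
lemma mm_zm_right[simp]: "mm A zm = zm" by (simp add: mm_def zm_def fun_eq_iff)
lemma mm_sm_left[simp]: "mm (sm x) A = (\<lambda>i j. x * A i j)" by (simp add: mm_def sm_def fun_eq_iff if_mult_z mult_if_z)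
lemma mm_neg_left: "mm (\<lambda>i j. - A i j) B = (\<lambda>i j. - mm A B i j)" by (simp add: mm_def fun_eq_iff sum_negf)
lemma zm_apply[simp]: "zm i j = 0" by (simp add: zm_def)

lemma blk_one: "blk idm zm zm idm = (mat 1 :: 'a::comm_ring_1^('n::finite+'n)^('n+'n))"
  by (simp add: blk_def mat_def vec_eq_iff idm_def split: sum.split)

lemma det_blk_U: "det (blk idm B zm idm) = (1::'a::comm_ring_1)"
proof -
  have "det (blk idm B zm idm) = prod (\<lambda>i. blk idm B zm idm $i$i) UNIV"
    by (rule det_rank[where r = "\<lambda>u. case u of Inl _ \<Rightarrow> 0 | Inr _ \<Rightarrow> 1"])
       (auto simp: blk_def idm_def split: sum.split)
  then show ?thesis by (simp add: blk_def idm_def prod_plus)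
qed

lemma det_blk_L: "det (blk idm zm C idm) = (1::'a::comm_ring_1)"
proof -
  have "det (blk idm zm C idm) = prod (\<lambda>i. blk idm zm C idm $i$i) UNIV"
    by (rule det_rank[where r = "\<lambda>u. case u of Inl _ \<Rightarrow> 1 | Inr _ \<Rightarrow> 0"])
       (auto simp: blk_def idm_def split: sum.split)
  then show ?thesis by (simp add: blk_def idm_def prod_plus)
qed

lemma det_blk_diag: "det (blk idm zm zm (\<lambda>i j. if i = j then dd i else 0)) = (\<Prod>k\<in>UNIV. dd k :: 'a::comm_ring_1)"
proof -
  have "det (blk idm zm zm (\<lambda>i j. if i = j then dd i else 0)) = prod (\<lambda>i. blk idm zm zm (\<lambda>i j. if i = j then dd i else 0) $i$i) UNIV"
    by (rule det_diagonal) (auto simp: blk_def idm_def split: sum.split)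
  then show ?thesis by (simp add: blk_def idm_def prod_plus)
qed

lemma det_K: "det (blk zm idm (\<lambda>i j. - idm i j) zm :: 'a::comm_ring_1^('n::finite+'n)^('n+'n)) * det (blk zm idm (\<lambda>i j. - idm i j) zm :: 'a^('n+'n)^('n+'n)) = 1"
proof -
  let ?K = "blk zm idm (\<lambda>i j. - idm i j) zm :: 'a^('n+'n)^('n+'n)"
  have "?K ** ?K = blk (\<lambda>i j. - idm i j) zm zm (\<lambda>i j. - idm i j)"
    by (simp add: blk_mult mm_neg_left, simp add: zm_def[abs_def])
  also have "det \<dots> = (-1) ^ (2 * CARD('n))"
    by (subst det_diagonal) (auto simp: blk_def idm_def prod_plus power_mult power2_eq_square split: sum.split)
  also have "\<dots> = 1" by (simp add: power_mult)
  finally show ?thesis by (simp add: det_mul)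
qed

lemma blk_eqI:
  assumes "\<And>i j. A i j = A' i j" "\<And>i j. B i j = B' i j" "\<And>i j. C i j = C' i j" "\<And>i j. D i j = D' i j"
  shows "blk A B C D = blk A' B' C' D'"
proof -
  have "A = A'" "B = B'" "C = C'" "D = D'" using assms by (auto intro!: ext)
  then show ?thesis by simp
qed

lemma mm_assoc: "mm (mm A B) C = mm A (mm B C)"
  unfolding mm_def fun_eq_iff by (simp add: sum_distrib_left sum_distrib_right mult.assoc, intro allI, rule sum.swap)

lemma charblock:
  fixes Mc Vc :: "'n::finite \<Rightarrow> 'n \<Rightarrow> 'a::comm_ring_1" and x :: 'a and dd :: "'n \<Rightarrow> 'a"
  assumes VV: "mm Vc (\<lambda>i j. Vc j i) = idm"
    and W: "(\<lambda>i j. (if i = j then 1 + x*x else 0) - x * Mc i j) = mm (mm Vc (\<lambda>i j. if i = j then dd i else 0)) (\<lambda>i j. Vc j i)"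
  shows "det (blk (\<lambda>i j. sm x i j - Mc i j) (\<lambda>i j. - idm i j) idm (sm x)) * det (blk zm idm (\<lambda>i j. - idm i j) zm :: 'a^('n+'n)^('n+'n)) = (\<Prod>k\<in>UNIV. dd k)"
proof -
  define A where "A = (\<lambda>i j. sm x i j - Mc i j)"
  define Wf where "Wf = (\<lambda>i j. (if i = j then 1 + x*x else 0) - x * Mc i j)"
  define Dd where "Dd = (\<lambda>i j. if i = j then dd i else (0::'a))"
  define VT where "VT = (\<lambda>i j. Vc j i)"
  let ?Z = "blk A (\<lambda>i j. - idm i j) idm (sm x) :: 'a^('n+'n)^('n+'n)"
  let ?K = "blk zm idm (\<lambda>i j. - idm i j) zm :: 'a^('n+'n)^('n+'n)"
  let ?L = "blk idm zm (\<lambda>i j. - sm x i j) idm :: 'a^('n+'n)^('n+'n)"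
  let ?D = "blk idm zm zm Wf :: 'a^('n+'n)^('n+'n)"
  let ?U = "blk idm A zm idm :: 'a^('n+'n)^('n+'n)"
  have ZK: "?Z ** ?K = blk idm A (\<lambda>i j. - sm x i j) idm"
    by (simp add: blk_mult mm_neg_left, simp add: idm_def[abs_def] sm_def[abs_def] zm_def[abs_def] if_mult_z mult_if_z cong: if_cong)
  have LDU: "?L ** (?D ** ?U) = blk idm A (\<lambda>i j. - sm x i j) idm"
    by (simp add: blk_mult mm_neg_left, rule blk_eqI)
       (auto simp: idm_def sm_def zm_def mm_def A_def Wf_def if_mult_z mult_if_z algebra_simps)
  have D3: "?D = blk idm zm zm Vc ** (blk idm zm zm Dd ** blk idm zm zm VT)"
    by (simp add: blk_mult Wf_def W Dd_def VT_def mm_assoc; (simp add: zm_def[abs_def] mm_def[abs_def])?)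
  have VV1: "det (blk idm zm zm Vc) * det (blk idm zm zm VT) = (1::'a)"
  proof -
    have "blk idm zm zm Vc ** blk idm zm zm VT = blk idm zm zm idm"
      by (simp add: blk_mult VT_def VV; (simp add: zm_def[abs_def] mm_def[abs_def])?)
    then show ?thesis by (simp add: det_mul[symmetric] blk_one)
  qed
  have "det ?Z * det ?K = det (?Z ** ?K)" by (simp add: det_mul)
  also have "\<dots> = det ?L * (det ?D * det ?U)" by (simp add: ZK LDU[symmetric] det_mul)
  also have "\<dots> = det ?D" by (simp add: det_blk_U det_blk_L)
  also have "\<dots> = det (blk idm zm zm Vc) * det (blk idm zm zm VT) * det (blk idm zm zm Dd)"
    by (simp add: D3 det_mul algebra_simps)
  also have "\<dots> = (\<Prod>k\<in>UNIV. dd k)" by (simp add: VV1 Dd_def det_blk_diag)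
  finally show ?thesis by (simp add: A_def)
qed


definition Jl :: "real^'n^'n \<Rightarrow> real^('n::finite + 'n) \<Rightarrow> real^('n + 'n)" where
  "Jl M z = (\<chi> s. case s of Inl i \<Rightarrow> z $ Inr i + (\<Sum>j\<in>UNIV. M $ i $ j * z $ Inl j) | Inr i \<Rightarrow> - z $ Inl i)"

lemma nth_hasd: "((\<lambda>z. z $ k) has_derivative (\<lambda>h. h $ k)) F"
  by (rule bounded_linear_imp_has_derivative[OF bounded_linear_vec_nth])

lemma F_deriv: "(coupled_field a b M has_derivative Jl M) (at 0)"
proof -
  have "((\<lambda>z. coupled_field a b M z $ u) has_derivative (\<lambda>h. Jl M h $ u)) (at 0)" for u
  proof (cases u)
    case (Inl i)
    have "((\<lambda>z. z $ Inr i + a * (z $ Inl i)^2 + b * (z $ Inl i)^3 + (\<Sum>j\<in>UNIV. M $ i $ j * z $ Inl j))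
        has_derivative (\<lambda>h. h $ Inr i + (\<Sum>j\<in>UNIV. M $ i $ j * h $ Inl j))) (at 0)"
      by (auto intro!: derivative_eq_intros nth_hasd)
    then show ?thesis using Inl by (simp add: coupled_field_def Jl_def)
  next
    case (Inr i)
    have "((\<lambda>z. - z $ Inl i) has_derivative (\<lambda>h. - h $ Inl i)) (at 0)"
      by (auto intro!: derivative_eq_intros nth_hasd)
    then show ?thesis using Inr by (simp add: coupled_field_def Jl_def)
  qed
  then show ?thesis
    by (subst has_derivative_componentwise_within) (auto simp: Basis_vec_def inner_axis)
qed

lemma F0: "coupled_field a b M 0 = 0"
  by (simp add: coupled_field_def vec_eq_iff split: sum.split)

lemma jac_F: "jacobian (coupled_field a b M) (at 0) = matrix (Jl M)"
proof -
  have "Jl M = frechet_derivative (coupled_field a b M) (at 0)" by (rule frechet_derivative_at[OF F_deriv])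
  then show ?thesis by (simp add: jacobian_def)
qed

lemma pc1: "[:1:] = 1" by (simp add: one_pCons)
lemma pcm1: "[:- 1:] = (- 1 :: 'a::comm_ring_1 poly)" by (simp add: one_pCons)
lemma ofr_if: "complex_of_real (if P then a else 0) = (if P then complex_of_real a else 0)" by simp

lemma charpoly_blk:
  "charpoly (matrix (Jl M)) = det (blk (\<lambda>i j. sm [:0,1:] i j - [:complex_of_real (M$i$j):]) (\<lambda>i j. - idm i j) idm (sm [:0,1:]))"
  unfolding charpoly_def
  by (rule arg_cong[where f=det])
     (auto simp: vec_eq_iff blk_def matrix_def Jl_def axis_def sm_def idm_def pc1 pcm1 ofr_if if_mult_z mult_if_z split: sum.split)

lemma sum_smult_pc3:
  fixes c p q r :: "'i \<Rightarrow> 'a::comm_ring_1"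
  assumes "finite A"
  shows "(\<Sum>l\<in>A. smult (c l) [:p l, q l, r l:]) = [:\<Sum>l\<in>A. c l * p l, \<Sum>l\<in>A. c l * q l, \<Sum>l\<in>A. c l * r l:]"
  using assms by (induction A rule: finite_induct) simp_all

lemma sum_pc3:
  fixes p q r :: "'i \<Rightarrow> 'a::comm_ring_1"
  assumes "finite A"
  shows "(\<Sum>l\<in>A. [:p l, q l, r l:]) = [:\<Sum>l\<in>A. p l, \<Sum>l\<in>A. q l, \<Sum>l\<in>A. r l:]"
  using assms by (induction A rule: finite_induct) simp_all

lemma sum_pc1:
  fixes f :: "'i \<Rightarrow> 'a::comm_ring_1"
  assumes "finite A"
  shows "(\<Sum>l\<in>A. [:f l:]) = [:\<Sum>l\<in>A. f l:]"
  using assms by (induction A rule: finite_induct) simp_all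

lemma charpoly_prod:
  fixes M V :: "real^'n^'n" and lam :: "'n \<Rightarrow> real"
  assumes orthV2: "\<And>i j. (\<Sum>l\<in>UNIV. V$i$l * V$j$l) = (if i = j then 1 else 0)"
    and eigM: "\<And>i j. (\<Sum>l\<in>UNIV. V$i$l * V$j$l * lam l) = M$i$j"
  shows "charpoly (matrix (Jl M)) * det (blk zm idm (\<lambda>i j. - idm i j) zm :: complex poly^('n+'n)^('n+'n))
      = (\<Prod>k\<in>UNIV. [:1, - complex_of_real (lam k), 1:])"
proof -
  define Vc where "Vc = (\<lambda>i j. [:complex_of_real (V$i$j):])"
  define Mc where "Mc = (\<lambda>i j. [:complex_of_real (M$i$j):])"
  define dd where "dd = (\<lambda>k. [:1, - complex_of_real (lam k), 1:])"
  define x where "x = ([:0, 1:] :: complex poly)"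
  have VV: "mm Vc (\<lambda>i j. Vc j i) = idm"
  proof (rule ext, rule ext)
    fix i j
    have "mm Vc (\<lambda>i j. Vc j i) i j = [:\<Sum>l\<in>UNIV. complex_of_real (V$i$l * V$j$l):]"
      by (simp add: mm_def Vc_def sum_pc1[symmetric] mult.commute)
    also have "\<dots> = [:complex_of_real (\<Sum>l\<in>UNIV. V$i$l * V$j$l):]" by simp
    also have "\<dots> = idm i j" by (simp add: orthV2 idm_def pc1)
    finally show "mm Vc (\<lambda>i j. Vc j i) i j = idm i j" .
  qed
  have oc: "(\<Sum>l\<in>UNIV. complex_of_real (V$i$l) * complex_of_real (V$j$l)) = (if i = j then 1 else 0)" for i j
    using arg_cong[OF orthV2[of i j], of complex_of_real] by (simp add: ofr_if)
  have W: "(\<lambda>i j. (if i = j then 1 + x*x else 0) - x * Mc i j) = mm (mm Vc (\<lambda>i j. if i = j then dd i else 0)) (\<lambda>i j. Vc j i)"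
  proof (rule ext, rule ext)
    fix i j
    have "mm (mm Vc (\<lambda>i j. if i = j then dd i else 0)) (\<lambda>i j. Vc j i) i j
        = (\<Sum>l\<in>UNIV. smult (complex_of_real (V$i$l * V$j$l)) [:1, - complex_of_real (lam l), 1:])"
    proof -
      have inner: "(\<Sum>k\<in>UNIV. Vc i k * (if k = l then dd k else 0)) = Vc i l * dd l" for l
        by (simp add: mult_if_z)
      show ?thesis unfolding mm_def inner
        by (rule sum.cong) (simp_all add: Vc_def dd_def algebra_simps)
    qed
    also have "\<dots> = [:\<Sum>l\<in>UNIV. complex_of_real (V$i$l * V$j$l), - complex_of_real (\<Sum>l\<in>UNIV. V$i$l * V$j$l * lam l),
                      \<Sum>l\<in>UNIV. complex_of_real (V$i$l * V$j$l):]"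
      by (simp add: sum_pc3 sum_negf)
    also have "\<dots> = (if i = j then 1 + x*x else 0) - x * Mc i j"
      by (simp add: eigM oc x_def Mc_def one_pCons)
    finally show "(if i = j then 1 + x*x else 0) - x * Mc i j = mm (mm Vc (\<lambda>i j. if i = j then dd i else 0)) (\<lambda>i j. Vc j i) i j"
      by simp
  qed
  show ?thesis
    using charblock[OF VV W] by (simp add: charpoly_blk x_def Mc_def dd_def)
qed


lemma poly_facts:
  fixes cp c :: "complex poly" and lam :: "'n::finite \<Rightarrow> real" and k0 :: 'n
  assumes prodeq: "cp * c = (\<Prod>k\<in>UNIV. [:1, - complex_of_real (lam k), 1:])"
    and cc: "c * c = 1"
    and lam1: "lam k0 = 0" and lamk: "\<And>k. k \<noteq> k0 \<Longrightarrow> lam k < 0"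
  shows "order \<i> cp = 1 \<and> order (- \<i>) cp = 1 \<and> (\<forall>\<mu>. poly cp \<mu> = 0 \<longrightarrow> \<mu> = \<i> \<or> \<mu> = - \<i> \<or> Re \<mu> < 0)"
proof -
  define dd where "dd = (\<lambda>k. [:1, - complex_of_real (lam k), 1:])"
  define P where "P = (\<Prod>k\<in>UNIV. dd k)"
  define Q where "Q = (\<Prod>k\<in>UNIV - {k0}. dd k)"
  have cnz: "poly c \<mu> \<noteq> 0" for \<mu>
  proof -
    have "poly c \<mu> * poly c \<mu> = 1" using arg_cong[OF cc, of "\<lambda>p. poly p \<mu>"] by simp
    then show ?thesis by auto
  qed
  have ddnz: "dd k \<noteq> 0" for k by (simp add: dd_def)
  have Pnz: "P \<noteq> 0" unfolding P_def using ddnz by simp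
  have cpc: "cp * c = P" using prodeq by (simp add: P_def dd_def)
  have cpnz: "cp \<noteq> 0" using cpc Pnz by auto
  have ord: "order \<alpha> cp = order \<alpha> P" for \<alpha>
  proof -
    have "order \<alpha> P = order \<alpha> cp + order \<alpha> c" using order_mult[of cp c \<alpha>] cpc Pnz by simp
    moreover have "order \<alpha> c = 0" by (rule order_0I[OF cnz])
    ultimately show ?thesis by simp
  qed
  have PQ: "P = dd k0 * Q" unfolding P_def Q_def by (simp add: prod.remove)
  have dd0: "dd k0 = [:-\<i>, 1:] * [:\<i>, 1:]" "dd k0 = [:\<i>, 1:] * [:-\<i>, 1:]"
    by (simp_all add: dd_def lam1)
  have polydd: "poly (dd k) \<mu> = 1 - complex_of_real (lam k) * \<mu> + \<mu> * \<mu>" for k \<mu>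
    by (simp add: dd_def algebra_simps)
  have ddi: "poly (dd k) \<alpha> \<noteq> 0" if "k \<noteq> k0" "\<alpha> = \<i> \<or> \<alpha> = - \<i>" for k \<alpha>
  proof -
    have "lam k \<noteq> 0" using lamk[OF that(1)] by simp
    then show ?thesis using that(2) by (auto simp: polydd)
  qed
  have Qi: "poly Q \<alpha> \<noteq> 0" if "\<alpha> = \<i> \<or> \<alpha> = - \<i>" for \<alpha>
    unfolding Q_def poly_prod using ddi[OF _ that] by (simp add: prod_zero_iff)
  have Qnz: "Q \<noteq> 0" using Qi[of \<i>] by auto
  have o1: "order \<i> [:-\<i>, 1:] = 1" using order_power_n_n[of \<i> 1] by simp
  have o2: "order (-\<i>) [:\<i>, 1:] = 1" using order_power_n_n[of "-\<i>" 1] by simp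
  have o3: "order \<i> [:\<i>, 1:] = 0" by (rule order_0I) simp
  have o4: "order (-\<i>) [:-\<i>, 1:] = 0" by (rule order_0I) simp
  have "order \<i> P = 1"
  proof -
    have "P = [:-\<i>, 1:] * ([:\<i>, 1:] * Q)" by (simp only: PQ dd0(1) mult.assoc)
    moreover have "[:\<i>, 1:] * Q \<noteq> 0" by (rule no_zero_divisors) (simp_all add: Qnz)
    ultimately have "order \<i> P = order \<i> [:-\<i>, 1:] + (order \<i> [:\<i>, 1:] + order \<i> Q)"
      using order_mult Pnz by (metis no_zero_divisors)
    then show ?thesis using o1 o3 order_0I[OF Qi[of \<i>]] by simp
  qed
  moreover have "order (-\<i>) P = 1"
  proof -
    have "P = [:\<i>, 1:] * ([:-\<i>, 1:] * Q)" by (simp only: PQ dd0(2) mult.assoc)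
    moreover have "[:-\<i>, 1:] * Q \<noteq> 0" by (rule no_zero_divisors) (simp_all add: Qnz)
    ultimately have "order (-\<i>) P = order (-\<i>) [:\<i>, 1:] + (order (-\<i>) [:-\<i>, 1:] + order (-\<i>) Q)"
      using order_mult Pnz by (metis no_zero_divisors)
    then show ?thesis using o2 o4 order_0I[OF Qi[of "-\<i>"]] by simp
  qed
  moreover have "\<mu> = \<i> \<or> \<mu> = - \<i> \<or> Re \<mu> < 0" if "poly cp \<mu> = 0" for \<mu>
  proof -
    have "poly P \<mu> = 0" using arg_cong[OF cpc, of "\<lambda>p. poly p \<mu>"] that by simp
    then obtain k where k: "poly (dd k) \<mu> = 0" unfolding P_def poly_prod by (auto simp: prod_zero_iff)
    show ?thesis
    proof (cases "k = k0")
      case True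
      then have "(\<mu> - \<i>) * (\<mu> + \<i>) = 0" using k lam1 by (simp add: polydd algebra_simps power2_eq_square)
      then show ?thesis by (auto simp: eq_neg_iff_add_eq_0)
    next
      case False
      define l where "l = lam k"
      have lneg: "l < 0" using lamk[OF False] by (simp add: l_def)
      have e: "1 - complex_of_real l * \<mu> + \<mu> * \<mu> = 0" using k polydd by (simp add: l_def)
      have re: "1 - l * Re \<mu> + (Re \<mu> * Re \<mu> - Im \<mu> * Im \<mu>) = 0"
        using arg_cong[OF e, of Re] by simp
      have im: "Im \<mu> * (2 * Re \<mu> - l) = 0"
        using arg_cong[OF e, of Im] by (simp add: algebra_simps)
      show ?thesis
      proof (cases "Im \<mu> = 0")
        case True
        show ?thesis
        proof (rule ccontr)
          assume "\<not> ?thesis"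
          then have x: "Re \<mu> \<ge> 0" by auto
          have "l * Re \<mu> \<le> 0" using lneg x by (simp add: mult_nonpos_nonneg)
          moreover have "Re \<mu> * Re \<mu> \<ge> 0" by simp
          moreover have "Im \<mu> * Im \<mu> = 0" using True by simp
          ultimately show False using re by linarith
        qed
      next
        case False
        then have "2 * Re \<mu> - l = 0" using im by simp
        then show ?thesis using lneg by simp
      qed
    qed
  qed
  ultimately show ?thesis using ord by simp
qed

lemma sign_part:
  fixes a b S4 D L \<gamma> l1 :: real
  assumes "l1 = L" "L = 3/8 * b * S4 + a^2 * D" "\<gamma> = sqrt (3/8 * S4 / D)" "S4 > 0" "D \<ge> 0"
  shows "sgn l1 = sgn L \<and> (b < 0 \<and> D > 0 \<longrightarrow> (\<bar>a\<bar> > \<gamma> * sqrt (- b) \<longrightarrow> l1 > 0) \<and> (\<bar>a\<bar> < \<gamma> * sqrt (- b) \<longrightarrow> l1 < 0))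
     \<and> (b > 0 \<longrightarrow> l1 > 0)"
proof -
  have A: "(\<bar>a\<bar> > \<gamma> * sqrt (- b) \<longrightarrow> l1 > 0) \<and> (\<bar>a\<bar> < \<gamma> * sqrt (- b) \<longrightarrow> l1 < 0)" if "b < 0" "D > 0"
  proof -
    define t where "t = 3/8 * S4 / D * (- b)"
    have t0: "t \<ge> 0" unfolding t_def using that assms(4) by (intro mult_nonneg_nonneg) simp_all
    have gs: "\<gamma> * sqrt (- b) = sqrt t" unfolding t_def assms(3) by (rule real_sqrt_mult[symmetric])
    have tD: "t * D = 3/8 * S4 * (- b)" unfolding t_def using that by simp
    have a2: "a^2 = \<bar>a\<bar>^2" by simp
    have st: "(sqrt t)^2 = t" using t0 by simp
    show ?thesis
    proof (intro conjI impI)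
      assume h: "\<bar>a\<bar> > \<gamma> * sqrt (- b)"
      then have "\<bar>a\<bar>^2 > (sqrt t)^2" unfolding gs using t0 by (intro power_strict_mono) auto
      then have "a^2 > t" using st by simp
      then have "a^2 * D > t * D" using that by simp
      then show "l1 > 0" using tD assms(1,2) by (simp add: algebra_simps)
    next
      assume h: "\<bar>a\<bar> < \<gamma> * sqrt (- b)"
      then have "\<bar>a\<bar>^2 < (sqrt t)^2" unfolding gs using t0 by (intro power_strict_mono) auto
      then have "a^2 < t" using st by simp
      then have "a^2 * D < t * D" using that by simp
      then show "l1 < 0" using tD assms(1,2) by (simp add: algebra_simps)
    qed
  qed
  have B: "l1 > 0" if "b > 0"
  proof -
    have "3/8 * b * S4 > 0" using that assms(4) by simp
    moreover have "a^2 * D \<ge> 0" using assms(5) by simp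
    ultimately show ?thesis using assms(1,2) by linarith
  qed
  show ?thesis using A B assms(1) by simp
qed


theorem mainTheorem1:
  fixes a b :: real and M V :: "real^'n^'n" and lam :: "'n \<Rightarrow> real" and k0 :: 'n
  assumes N2: "CARD('n) \<ge> 2"
    and symM: "transpose M = M"
    and orthV: "transpose V ** V = mat 1"
    and eig: "\<And>k. M *v column k V = lam k *\<^sub>R column k V"
    and lam1: "lam k0 = 0"
    and lamk: "\<And>k. k \<noteq> k0 \<Longrightarrow> lam k < 0"
  defines "F \<equiv> coupled_field a b M"
    and "L \<equiv> 3/8 * b * (\<Sum>\<phi>\<in>UNIV. (V $ \<phi> $ k0)^4)
              + a^2 * (\<Sum>k\<in>UNIV - {k0}. (\<Sum>\<phi>\<in>UNIV. V $ \<phi> $ k * (V $ \<phi> $ k0)^2)^2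
                                         * (- lam k) / (4 * (lam k)^2 + 9))"
    and "D \<equiv> (\<Sum>k\<in>UNIV - {k0}. (\<Sum>\<phi>\<in>UNIV. V $ \<phi> $ k * (V $ \<phi> $ k0)^2)^2
                                         * (- lam k) / (4 * (lam k)^2 + 9))"
    and "\<gamma> \<equiv> sqrt (3/8 * (\<Sum>\<phi>\<in>UNIV. (V $ \<phi> $ k0)^4)
              / (\<Sum>k\<in>UNIV - {k0}. (\<Sum>\<phi>\<in>UNIV. V $ \<phi> $ k * (V $ \<phi> $ k0)^2)^2
                                         * (- lam k) / (4 * (lam k)^2 + 9)))"
  shows
    "F 0 = 0 \<and> F differentiable (at 0) \<and>
     order \<i> (charpoly (jacobian F (at 0))) = 1 \<and>
     order (- \<i>) (charpoly (jacobian F (at 0))) = 1 \<and>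
     (\<forall>\<mu>. poly (charpoly (jacobian F (at 0))) \<mu> = 0 \<longrightarrow> \<mu> = \<i> \<or> \<mu> = - \<i> \<or> Re \<mu> < 0) \<and>
     (\<forall>S Phi. local_center_manifold F (coord_u V k0) (coord_p V k0) (center_e1 V k0) (center_e2 V k0) S Phi \<longrightarrow>
        (let l1 = lyap1 (restr_f a b M V k0 Phi) (restr_g a b M V k0 Phi) in
           sgn l1 = sgn L \<and>
           (b < 0 \<and> D > 0 \<longrightarrow> (\<bar>a\<bar> > \<gamma> * sqrt (- b) \<longrightarrow> l1 > 0) \<and> (\<bar>a\<bar> < \<gamma> * sqrt (- b) \<longrightarrow> l1 < 0)) \<and>
           (b > 0 \<longrightarrow> l1 > 0)))"
proof -
  note Fd = \<open>F \<equiv> coupled_field a b M\<close>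
  note Ld = assms(8) and Dd = assms(9) and gd = assms(10)
  have orthV2: "V ** transpose V = mat 1" using orthV matrix_left_right_inverse by blast
  have orth2: "(\<Sum>l\<in>UNIV. V$i$l * V$j$l) = (if i = j then 1 else 0)" for i j
  proof -
    have "(V ** transpose V) $ i $ j = (\<Sum>l\<in>UNIV. V$i$l * V$j$l)"
      by (simp add: matrix_matrix_mult_def transpose_def)
    then show ?thesis using orthV2 by (simp add: mat_def)
  qed
  have orth1: "(\<Sum>l\<in>UNIV. V$l$i * V$l$j) = (if i = j then 1 else 0)" for i j
  proof -
    have "(transpose V ** V) $ i $ j = (\<Sum>l\<in>UNIV. V$l$i * V$l$j)"
      by (simp add: matrix_matrix_mult_def transpose_def)
    then show ?thesis using orthV by (simp add: mat_def)
  qed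
  have eigc: "(\<Sum>k\<in>UNIV. M$i$k * V$k$l) = lam l * V$i$l" for i l
    using arg_cong[OF eig[of l], of "\<lambda>v. v $ i"] by (simp add: matrix_vector_mult_def column_def)
  have eigM: "(\<Sum>l\<in>UNIV. V$i$l * V$j$l * lam l) = M$i$j" for i j
  proof -
    have "(\<Sum>l\<in>UNIV. V$i$l * V$j$l * lam l) = (\<Sum>l\<in>UNIV. (\<Sum>k\<in>UNIV. M$i$k * V$k$l) * V$j$l)"
      by (simp add: eigc algebra_simps)
    also have "\<dots> = (\<Sum>l\<in>UNIV. \<Sum>k\<in>UNIV. M$i$k * V$k$l * V$j$l)"
      by (simp add: sum_distrib_right)
    also have "\<dots> = (\<Sum>k\<in>UNIV. \<Sum>l\<in>UNIV. M$i$k * V$k$l * V$j$l)"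
      by (rule sum.swap)
    also have "\<dots> = (\<Sum>k\<in>UNIV. M$i$k * (\<Sum>l\<in>UNIV. V$k$l * V$j$l))"
      by (simp add: sum_distrib_left mult.assoc)
    also have "\<dots> = M$i$j" by (simp add: orth2 mult_if_z)
    finally show ?thesis .
  qed
  have cp: "charpoly (jacobian F (at 0)) * det (blk zm idm (\<lambda>i j. - idm i j) zm :: complex poly^('n+'n)^('n+'n))
      = (\<Prod>k\<in>UNIV. [:1, - complex_of_real (lam k), 1:])"
    using charpoly_prod[OF orth2 eigM] by (simp add: Fd jac_F)
  have PF: "order \<i> (charpoly (jacobian F (at 0))) = 1 \<and>
     order (- \<i>) (charpoly (jacobian F (at 0))) = 1 \<and>
     (\<forall>\<mu>. poly (charpoly (jacobian F (at 0))) \<mu> = 0 \<longrightarrow> \<mu> = \<i> \<or> \<mu> = - \<i> \<or> Re \<mu> < 0)"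
    by (rule poly_facts[OF cp det_K lam1 lamk])
  have S4: "(\<Sum>\<phi>\<in>UNIV. (V $ \<phi> $ k0)^4) > 0"
  proof -
    have "(\<Sum>l\<in>UNIV. V$l$k0 * V$l$k0) = 1" using orth1[of k0 k0] by simp
    then obtain \<phi> where "V$\<phi>$k0 \<noteq> 0" by (metis (no_types, lifting) mult_zero_left sum.neutral zero_neq_one)
    then have "(V $ \<phi> $ k0)^4 > 0" by simp
    then show ?thesis by (intro sum_pos2[of UNIV \<phi>]) simp_all
  qed
  have D0: "(\<Sum>k\<in>UNIV - {k0}. (\<Sum>\<phi>\<in>UNIV. V $ \<phi> $ k * (V $ \<phi> $ k0)^2)^2
                                         * (- lam k) / (4 * (lam k)^2 + 9)) \<ge> 0"
  proof (rule sum_nonneg)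
    fix k assume "k \<in> UNIV - {k0}"
    then have "lam k < 0" using lamk by blast
    then show "0 \<le> (\<Sum>\<phi>\<in>UNIV. V $ \<phi> $ k * (V $ \<phi> $ k0)^2)^2 * (- lam k) / (4 * (lam k)^2 + 9)"
      by (intro divide_nonneg_pos mult_nonneg_nonneg) (simp_all add: add_pos_nonneg)
  qed
  have CM: "let l1 = lyap1 (restr_f a b M V k0 Phi) (restr_g a b M V k0 Phi) in
           sgn l1 = sgn L \<and>
           (b < 0 \<and> D > 0 \<longrightarrow> (\<bar>a\<bar> > \<gamma> * sqrt (- b) \<longrightarrow> l1 > 0) \<and> (\<bar>a\<bar> < \<gamma> * sqrt (- b) \<longrightarrow> l1 < 0)) \<and>
           (b > 0 \<longrightarrow> l1 > 0)"
    if "local_center_manifold F (coord_u V k0) (coord_p V k0) (center_e1 V k0) (center_e2 V k0) S Phi" for S Phi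
  proof -
    have l1: "lyap1 (restr_f a b M V k0 Phi) (restr_g a b M V k0 Phi) = L"
      unfolding Ld by (rule cm_lyap[OF symM orthV orthV2 eig lam1]) (use that in \<open>simp add: Fd\<close>)
    show ?thesis unfolding Let_def
      by (rule sign_part[OF l1 _ _ S4 D0[folded Dd]]) (simp_all add: Ld Dd gd)
  qed
  show ?thesis
    using PF CM F_deriv[of a b M] by (auto simp: Fd F0 differentiable_def)
qed


end
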